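(* There is an absolute constant $c>0$ such that the following holds. Let $\beta^*\in\mathbb R^d$, $\mathbf X\in\mathbb R^{n\times d}$ with i.i.d. $N(0,1)$ entries, and $\eta\in\mathbb R^n$ deterministic with $|\{i:|\eta_i|\le1\}|\ge\alpha n$ for some $\alpha\in(0,1]$; let $\mathbf y=\mathbf X\beta^*+\eta$. Let $\hat\beta$ be the output of the Coordinate-wise Median Algorithm on $(\mathbf y,\mathbf X)$. Then for any $0<\tau\le\alpha^2n$, \[\|\beta^*-\hat\beta\|^2\le\frac{d\,\tau}{\alpha^2n}\big(1+\|\beta^*\|^2\big)\] with probability at least $1-2\exp(\ln d-c\tau)$.
   Context: Coordinate-wise Median Algorithm on input $(y,X)\in\mathbb R^n\times\mathbb R^{n\times d}$: sample independent $w_i\sim N(0,1)$ and Rademacher signs $\sigma_i$, independent of everything else, and set $y'_i=\sigma_iy_i+w_i$, $X'_{i,\cdot}=\sigma_iX_{i,\cdot}$. For each $j\in[d]$ let $M_j=\{i:|X'_{ij}|\ge1/2\}$ and let $\hat\beta_j$ be the median of $\{y'_i/X'_{ij}:i\in M_j\}$. Output $\hat\beta=(\hat\beta_1,\dots,\hat\beta_d)$. *)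

theory Defs
  imports "HOL-Probability.Probability"
begin

definition std_gauss :: "real measure" where
  "std_gauss = density lborel (\<lambda>x. ennreal (std_normal_density x))"

definition rademacher :: "real measure" where
  "rademacher = measure_pmf (pmf_of_set {-1, 1})"

definition median :: "real list \<Rightarrow> real" where
  "median xs = (let ys = sort xs; k = length ys in
     if k = 0 then 0
     else if odd k then ys ! (k div 2)
     else (ys ! (k div 2 - 1) + ys ! (k div 2)) / 2)"

text \<open>Output of the Coordinate-wise Median Algorithm on input (y, X) with
  auxiliary randomness w (Gaussian) and sigma (Rademacher signs).
  Rows i < n, columns j < d.\<close>
definition cwm_estimate ::
  "nat \<Rightarrow> (nat \<Rightarrow> real) \<Rightarrow> (nat \<Rightarrow> nat \<Rightarrow> real) \<Rightarrow> (nat \<Rightarrow> real) \<Rightarrow> (nat \<Rightarrow> real)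
     \<Rightarrow> nat \<Rightarrow> real" where
  "cwm_estimate n y X w \<sigma> j =
     (let y' = (\<lambda>i. \<sigma> i * y i + w i); X' = (\<lambda>i. \<sigma> i * X i j) in
      median (map (\<lambda>i. y' i / X' i) (filter (\<lambda>i. \<bar>X' i\<bar> \<ge> 1/2) [0..<n])))"

definition cwm_space :: "nat \<Rightarrow> nat \<Rightarrow>
    ((nat \<Rightarrow> nat \<Rightarrow> real) \<times> (nat \<Rightarrow> real) \<times> (nat \<Rightarrow> real)) measure" where
  "cwm_space n d =
     (PiM {..<n} (\<lambda>i. PiM {..<d} (\<lambda>j. std_gauss)))
       \<Otimes>\<^sub>M ((PiM {..<n} (\<lambda>i. std_gauss)) \<Otimes>\<^sub>M (PiM {..<n} (\<lambda>i. rademacher)))"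

end

theory Submission
  imports Defs "HOL-Probability.Hoeffding"
begin

lemma sets_std_gauss[simp, measurable_cong]: "sets std_gauss = sets borel"
  by (simp add: std_gauss_def)
lemma space_std_gauss[simp]: "space std_gauss = UNIV"
  by (simp add: std_gauss_def)
lemma prob_space_std_gauss[simp, intro]: "prob_space std_gauss"
  unfolding std_gauss_def by (rule prob_space_normal_density) simp
lemma sets_rademacher[simp]: "sets rademacher = UNIV"
  by (simp add: rademacher_def)
lemma space_rademacher[simp]: "space rademacher = UNIV"
  by (simp add: rademacher_def)
lemma prob_space_rademacher[simp, intro]: "prob_space rademacher"
  unfolding rademacher_def by (rule prob_space_measure_pmf)

lemma nn_integral_rademacher:
  "(\<integral>\<^sup>+ s. f s \<partial>rademacher) = (f 1 + f (-1)) / 2"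
  unfolding rademacher_def
  by (subst nn_integral_pmf_of_set) (auto simp: add.commute)

lemma measurable_rademacher[measurable_cong]: "measurable rademacher N = {f. \<forall>x. f x \<in> space N}"
  unfolding rademacher_def by (auto simp: measurable_def)

lemma nn_integral_std_gauss:
  assumes [measurable]: "f \<in> borel_measurable borel"
  shows "(\<integral>\<^sup>+ y. f y \<partial>std_gauss) = (\<integral>\<^sup>+ y. ennreal (std_normal_density y) * f y \<partial>lborel)"
  unfolding std_gauss_def by (subst nn_integral_density) auto

lemma nn_integral_std_gauss_uminus:
  assumes [measurable]: "f \<in> borel_measurable borel"
  shows "(\<integral>\<^sup>+ y. f (- y) \<partial>std_gauss) = (\<integral>\<^sup>+ y. f y \<partial>std_gauss)"
proof -
  have "(\<integral>\<^sup>+ y. f y \<partial>std_gauss) = (\<integral>\<^sup>+ y. ennreal (std_normal_density y) * f y \<partial>lborel)"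
    by (rule nn_integral_std_gauss) simp
  also have "\<dots> = ennreal \<bar>-1\<bar> * (\<integral>\<^sup>+ y. ennreal (std_normal_density (0 + -1 * y)) * f (0 + -1 * y) \<partial>lborel)"
    by (rule nn_integral_real_affine) auto
  also have "\<dots> = (\<integral>\<^sup>+ y. ennreal (std_normal_density y) * f (- y) \<partial>lborel)"
    by (simp add: normal_density_def)
  also have "\<dots> = (\<integral>\<^sup>+ y. f (- y) \<partial>std_gauss)"
    by (rule nn_integral_std_gauss[symmetric]) simp
  finally show ?thesis ..
qed

lemma nn_integral_ge_interval:
  assumes "a \<le> b" "{a..b} \<subseteq> S" "\<And>y. y \<in> {a..b} \<Longrightarrow> C \<le> f y" "0 \<le> C"
  shows "ennreal (C * (b - a)) \<le> (\<integral>\<^sup>+ y. indicator S y * ennreal (f y) \<partial>lborel)"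
proof -
  have "ennreal (C * (b - a)) = (\<integral>\<^sup>+ y. ennreal C * indicator {a..b} y \<partial>lborel)"
    using assms by (simp add: nn_integral_cmult_indicator ennreal_mult)
  also have "\<dots> \<le> (\<integral>\<^sup>+ y. indicator S y * ennreal (f y) \<partial>lborel)"
    using assms by (intro nn_integral_mono) (auto simp: indicator_def subset_iff intro!: ennreal_leI)
  finally show ?thesis .
qed

definition kappa2 :: real where "kappa2 = 2 * exp (- 9 / 2) / sqrt (2 * pi)"

lemma kappa2_pos: "0 < kappa2" by (simp add: kappa2_def)
lemma kappa2_le1: "kappa2 \<le> 1"
proof -
  have e: "exp (- (9 / 2) :: real) \<le> 1" by simp
  have s: "(2::real) \<le> sqrt (2 * pi)"
    using pi_gt3 by (simp add: real_le_rsqrt)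
  have "2 * exp (- (9 / 2)) \<le> sqrt (2 * pi)" using e s by linarith
  then show ?thesis unfolding kappa2_def using s by (simp add: divide_simps)
qed

lemma gauss_interval_lower:
  fixes \<sigma> b u :: real
  assumes "0 < \<sigma>" "\<bar>b\<bar> \<le> 2 * \<sigma>" "0 < u"
  shows "ennreal (kappa2 * min u \<sigma> / \<sigma>) \<le>
    (\<integral>\<^sup>+ y. indicator {y. \<bar>y + b\<bar> \<le> u} y * ennreal (normal_density 0 \<sigma> y) \<partial>lborel)"
proof -
  define m where "m = min u \<sigma>"
  have m: "0 < m" "m \<le> u" "m \<le> \<sigma>" using assms by (auto simp: m_def)
  define C where "C = exp (- 9 / 2) / (\<sigma> * sqrt (2 * pi))"
  have sq: "sqrt (2 * pi * \<sigma>\<^sup>2) = \<sigma> * sqrt (2 * pi)"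
    using assms by (simp add: real_sqrt_mult)
  have "ennreal (C * ((- b + m) - (- b - m))) \<le>
      (\<integral>\<^sup>+ y. indicator {y. \<bar>y + b\<bar> \<le> u} y * ennreal (normal_density 0 \<sigma> y) \<partial>lborel)"
  proof (rule nn_integral_ge_interval)
    show "- b - m \<le> - b + m" using m by simp
    show "{- b - m..- b + m} \<subseteq> {y. \<bar>y + b\<bar> \<le> u}" using m by auto
    show "0 \<le> C" using assms by (simp add: C_def)
    fix y assume y: "y \<in> {- b - m..- b + m}"
    then have "\<bar>y\<bar> \<le> 3 * \<sigma>" using assms m by auto
    then have "y\<^sup>2 \<le> (3 * \<sigma>)\<^sup>2" by (metis abs_le_square_iff abs_of_pos assms(1) mult_pos_pos zero_less_numeral abs_mult abs_numeral)
    then have "y\<^sup>2 / (2 * \<sigma>\<^sup>2) \<le> 9 / 2" using assms by (simp add: divide_simps power_mult_distrib)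
    then have "exp (- 9 / 2) \<le> exp (- y\<^sup>2 / (2 * \<sigma>\<^sup>2))" by simp
    then show "C \<le> normal_density 0 \<sigma> y"
      unfolding normal_density_def C_def sq using assms
      by (simp add: divide_right_mono)
  qed
  also have "C * ((- b + m) - (- b - m)) = kappa2 * m / \<sigma>"
    unfolding C_def kappa2_def using assms by (simp add: field_simps)
  finally show ?thesis by (simp add: m_def)
qed

definition kappa1 :: real where "kappa1 = exp (- 1 / 2) / (2 * sqrt (2 * pi))"
lemma kappa1_pos: "0 < kappa1" by (simp add: kappa1_def)

lemma gauss_tail_lower:
  "ennreal kappa1 \<le> (\<integral>\<^sup>+ y. indicator {y. 1/2 \<le> \<bar>y\<bar>} y \<partial>std_gauss)"
proof -
  define C where "C = exp (- 1 / 2) / sqrt (2 * pi)"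
  have "ennreal (C * (1 - 1/2)) \<le>
      (\<integral>\<^sup>+ y. indicator {y. 1/2 \<le> \<bar>y\<bar>} y * ennreal (std_normal_density y) \<partial>lborel)"
  proof (rule nn_integral_ge_interval)
    show "{1 / 2..1::real} \<subseteq> {y. 1 / 2 \<le> \<bar>y\<bar>}" by auto
    show "0 \<le> C" by (simp add: C_def)
    fix y :: real assume y: "y \<in> {1 / 2..1}"
    then have "y\<^sup>2 \<le> 1" by (simp add: abs_square_le_1)
    then have "exp (- 1 / 2) \<le> exp (- y\<^sup>2 / 2)" by simp
    then show "C \<le> std_normal_density y"
      unfolding std_normal_density_def C_def by (simp add: divide_right_mono)
  qed simp
  also have "\<dots> = (\<integral>\<^sup>+ y. indicator {y. 1/2 \<le> \<bar>y\<bar>} y \<partial>std_gauss)"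
    by (subst nn_integral_std_gauss) (auto simp: mult.commute)
  finally show ?thesis by (simp add: C_def kappa1_def mult.commute)
qed

lemma prob_space_gaussPi[simp, intro]: "prob_space (PiM J (\<lambda>_. std_gauss))"
  by (intro prob_space_PiM) auto

lemma distr_std_gauss_borel: "distr M borel f = distr M std_gauss f"
  by (rule distr_cong) auto

lemma distr_std_gauss_lborel: "distr M lborel f = distr M std_gauss f"
  by (rule distr_cong) auto

lemma distr_gauss_comp:
  "k \<in> J \<Longrightarrow> distr (PiM J (\<lambda>_. std_gauss)) std_gauss (\<lambda>x. x k) = std_gauss"
  by (rule distr_PiM_component) auto

lemma indep_coords:
  assumes "J \<noteq> {}"
  shows "prob_space.indep_vars (PiM J (\<lambda>_. std_gauss)) (\<lambda>_. borel) (\<lambda>k x. x k) J"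
proof -
  interpret P: prob_space "PiM J (\<lambda>_. std_gauss)" by simp
  have "distr (PiM J (\<lambda>_. std_gauss)) (PiM J (\<lambda>_. borel)) (\<lambda>x. \<lambda>k\<in>J. x k)
      = distr (PiM J (\<lambda>_. std_gauss)) (PiM J (\<lambda>_. borel)) (\<lambda>x. x)"
    by (rule distr_cong) (auto simp: space_PiM)
  also have "\<dots> = PiM J (\<lambda>_. std_gauss)"
    by (rule distr_id2) (intro sets_PiM_cong; simp)
  also have "\<dots> = PiM J (\<lambda>k. distr (PiM J (\<lambda>_. std_gauss)) borel (\<lambda>x. x k))"
    by (intro PiM_cong refl) (simp add: distr_std_gauss_borel distr_gauss_comp)
  finally show ?thesis
    using assms by (subst P.indep_vars_iff_distr_eq_PiM') auto
qed

lemma coord_distributed: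
  assumes "k \<in> J"
  shows "distributed (PiM J (\<lambda>_. std_gauss)) lborel (\<lambda>x. x k) (\<lambda>y. ennreal (std_normal_density y))"
  unfolding distributed_def
proof (intro conjI)
  show "distr (PiM J (\<lambda>_. std_gauss)) lborel (\<lambda>x. x k) = density lborel (\<lambda>y. ennreal (std_normal_density y))"
    using assms by (simp add: distr_std_gauss_lborel distr_gauss_comp std_gauss_def[symmetric])
qed (use assms in auto)

lemma gauss_sum_distributed:
  assumes J: "finite J" and nz: "\<exists>k\<in>J. \<beta> k \<noteq> 0"
  shows "distributed (PiM J (\<lambda>_. std_gauss)) lborel (\<lambda>x. \<Sum>k\<in>J. \<beta> k * x k)
           (\<lambda>y. ennreal (normal_density 0 (sqrt (\<Sum>k\<in>J. (\<beta> k)\<^sup>2)) y))"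
proof -
  interpret P: prob_space "PiM J (\<lambda>_. std_gauss)" by simp
  define K where "K = {k\<in>J. \<beta> k \<noteq> 0}"
  have K: "finite K" "K \<noteq> {}" "K \<subseteq> J" using J nz by (auto simp: K_def)
  have s1: "(\<lambda>x. \<Sum>k\<in>J. \<beta> k * x k) = (\<lambda>x. \<Sum>k\<in>K. \<beta> k * x k)"
    by (intro ext sum.mono_neutral_right J) (auto simp: K_def)
  have s2: "(\<Sum>k\<in>J. (\<beta> k)\<^sup>2) = (\<Sum>k\<in>K. \<bar>\<beta> k\<bar>\<^sup>2)"
    by (subst sum.mono_neutral_right[OF J K(3)]) (auto simp: K_def)
  have ind: "P.indep_vars (\<lambda>_. borel) (\<lambda>k x. \<beta> k * x k) K"
  proof -
    have "P.indep_vars (\<lambda>_. borel) (\<lambda>k x. x k) K"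
      using P.indep_vars_subset[OF indep_coords K(3)] K by auto
    then have "P.indep_vars (\<lambda>_. borel) (\<lambda>k. (\<lambda>y. \<beta> k * y) \<circ> (\<lambda>x. x k)) K"
      by (rule P.indep_vars_compose) auto
    then show ?thesis by (simp add: o_def)
  qed
  have "distributed (PiM J (\<lambda>_. std_gauss)) lborel (\<lambda>x. \<Sum>k\<in>K. \<beta> k * x k)
           (\<lambda>y. ennreal (normal_density (\<Sum>k\<in>K. 0) (sqrt (\<Sum>k\<in>K. (\<bar>\<beta> k\<bar>)\<^sup>2)) y))"
  proof (rule P.sum_indep_normal[OF K(1,2) ind])
    fix k assume k: "k \<in> K"
    then show "0 < \<bar>\<beta> k\<bar>" by (simp add: K_def)
    have "distributed (PiM J (\<lambda>_. std_gauss)) lborel (\<lambda>x. 0 + \<beta> k * x k)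
         (\<lambda>y. ennreal (normal_density (0 + \<beta> k * 0) (\<bar>\<beta> k\<bar> * 1) y))"
      by (rule P.normal_density_affine[OF coord_distributed]) (use k K in \<open>auto simp: K_def\<close>)
    then show "distributed (PiM J (\<lambda>_. std_gauss)) lborel (\<lambda>x. \<beta> k * x k)
         (\<lambda>y. ennreal (normal_density 0 \<bar>\<beta> k\<bar> y))" by simp
  qed
  then show ?thesis unfolding s1 s2 by simp
qed

lemma measurable_rademacher_any[measurable]: "f \<in> measurable rademacher (borel :: real measure)"
  by (simp add: measurable_def)

definition rowM :: "nat \<Rightarrow> ((nat \<Rightarrow> real) \<times> real \<times> real) measure" where
  "rowM d = PiM {..<d} (\<lambda>_. std_gauss) \<Otimes>\<^sub>M (std_gauss \<Otimes>\<^sub>M rademacher)"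

lemma prob_space_rowM[simp, intro]: "prob_space (rowM d)"
  unfolding rowM_def
  by (intro prob_space_pair prob_space_gaussPi prob_space_std_gauss prob_space_rademacher)

interpretation gaussP: product_sigma_finite "\<lambda>_::nat. std_gauss"
  by (auto simp: product_sigma_finite_def prob_space_imp_sigma_finite)

lemma sf_gauss_rad: "sigma_finite_measure (std_gauss \<Otimes>\<^sub>M rademacher)"
  by (intro prob_space_imp_sigma_finite prob_space_pair) auto

lemma sf_rad: "sigma_finite_measure rademacher"
  by (intro prob_space_imp_sigma_finite) auto

lemma row_integral:
  assumes j: "j < d" and h[measurable]: "h \<in> borel_measurable (rowM d)"
  shows "(\<integral>\<^sup>+ r. h r \<partial>rowM d) =
    (\<integral>\<^sup>+ x. \<integral>\<^sup>+ y. \<integral>\<^sup>+ w. (h (x(j:=y), (w, 1)) + h (x(j:=y), (w, -1))) / 2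
        \<partial>std_gauss \<partial>std_gauss \<partial>PiM ({..<d} - {j}) (\<lambda>_. std_gauss))"
proof -
  have h'[measurable]: "h \<in> borel_measurable (PiM {..<d} (\<lambda>_. std_gauss) \<Otimes>\<^sub>M (std_gauss \<Otimes>\<^sub>M rademacher))"
    using h by (simp add: rowM_def)
  define G where "G = (\<lambda>x. \<integral>\<^sup>+ p. h (x, p) \<partial>(std_gauss \<Otimes>\<^sub>M rademacher))"
  have G[measurable]: "G \<in> borel_measurable (PiM {..<d} (\<lambda>_. std_gauss))"
    unfolding G_def
    by (rule sigma_finite_measure.borel_measurable_nn_integral_fst[OF sf_gauss_rad h'])
  have "(\<integral>\<^sup>+ r. h r \<partial>rowM d) = (\<integral>\<^sup>+ x. G x \<partial>PiM {..<d} (\<lambda>_. std_gauss))"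
    unfolding rowM_def G_def
    by (rule sigma_finite_measure.nn_integral_fst[OF sf_gauss_rad h', symmetric])
  also have "{..<d} = insert j ({..<d} - {j})" using j by auto
  also have "(\<integral>\<^sup>+ x. G x \<partial>PiM (insert j ({..<d} - {j})) (\<lambda>_. std_gauss)) =
      (\<integral>\<^sup>+ x. \<integral>\<^sup>+ y. G (x(j:=y)) \<partial>std_gauss \<partial>PiM ({..<d} - {j}) (\<lambda>_. std_gauss))"
    by (rule gaussP.product_nn_integral_insert) (use j G in \<open>auto simp: insert_absorb\<close>)
  also have "\<dots> = (\<integral>\<^sup>+ x. \<integral>\<^sup>+ y. \<integral>\<^sup>+ w. (h (x(j:=y), (w, 1)) + h (x(j:=y), (w, -1))) / 2
        \<partial>std_gauss \<partial>std_gauss \<partial>PiM ({..<d} - {j}) (\<lambda>_. std_gauss))"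
  proof (intro nn_integral_cong)
    fix x y assume x: "x \<in> space (PiM ({..<d} - {j}) (\<lambda>_. std_gauss))"
    have xj: "x(j:=y) \<in> space (PiM {..<d} (\<lambda>_. std_gauss))"
      using x j by (auto simp: space_PiM PiE_def extensional_def)
    have hx[measurable]: "(\<lambda>p. h (x(j:=y), p)) \<in> borel_measurable (std_gauss \<Otimes>\<^sub>M rademacher)"
      using measurable_Pair2[OF h' xj] by simp
    have "G (x(j:=y)) = (\<integral>\<^sup>+ w. \<integral>\<^sup>+ s. h (x(j:=y), (w, s)) \<partial>rademacher \<partial>std_gauss)"
      unfolding G_def
      by (rule sigma_finite_measure.nn_integral_fst[OF sf_rad hx, symmetric])
    then show "G (x(j:=y)) = (\<integral>\<^sup>+ w. (h (x(j:=y), (w, 1)) + h (x(j:=y), (w, -1))) / 2 \<partial>std_gauss)"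
      by (simp add: nn_integral_rademacher)
  qed
  finally show ?thesis .
qed

definition Dv :: "nat \<Rightarrow> (nat \<Rightarrow> real) \<Rightarrow> real \<Rightarrow> nat \<Rightarrow> (nat \<Rightarrow> real) \<times> real \<times> real \<Rightarrow> real" where
  "Dv d \<beta> \<eta> j r = (snd (snd r) * ((\<Sum>k<d. fst r k * \<beta> k) + \<eta>) + fst (snd r)) / (snd (snd r) * fst r j) - \<beta> j"

definition inMr :: "nat \<Rightarrow> (nat \<Rightarrow> real) \<times> real \<times> real \<Rightarrow> bool" where
  "inMr j r \<longleftrightarrow> 1/2 \<le> \<bar>snd (snd r) * fst r j\<bar>"

lemma rowM_x: "k < d \<Longrightarrow> (\<lambda>r. fst r k) \<in> borel_measurable (rowM d)"
  unfolding rowM_def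
proof (rule measurable_compose[OF measurable_fst])
  assume "k < d"
  have "(\<lambda>a. a k) \<in> measurable (PiM {..<d} (\<lambda>_. std_gauss)) std_gauss"
    using \<open>k < d\<close> by (intro measurable_component_singleton) simp
  then show "(\<lambda>a. a k) \<in> borel_measurable (PiM {..<d} (\<lambda>_. std_gauss))"
    by (simp add: measurable_cong_sets[OF refl sets_std_gauss])
qed

lemma rowM_w: "(\<lambda>r. fst (snd r)) \<in> borel_measurable (rowM d)"
  unfolding rowM_def
  by (rule measurable_compose[OF measurable_snd]) (simp add: measurable_fst'')

lemma rowM_s: "(\<lambda>r. snd (snd r)) \<in> borel_measurable (rowM d)"
  unfolding rowM_def
  by (rule measurable_compose[OF measurable_snd]) (rule measurable_snd'', simp)

lemma rowM_sum: "(\<lambda>r. \<Sum>k<d. fst r k * \<beta> k) \<in> borel_measurable (rowM d)"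
  by (intro borel_measurable_sum borel_measurable_times rowM_x measurable_const) auto

lemma Dv_measurable[measurable]:
  assumes "j < d"
  shows "Dv d \<beta> \<eta> j \<in> borel_measurable (rowM d)"
  unfolding Dv_def
  using rowM_x[OF assms] rowM_w rowM_s rowM_sum by measurable

lemma inMr_measurable[measurable]:
  assumes "j < d"
  shows "Measurable.pred (rowM d) (inMr j)"
  unfolding inMr_def
  using rowM_x[OF assms] rowM_s by measurable

lemma row_slice_meas:
  assumes j: "j < d" and h: "h \<in> borel_measurable (rowM d)"
    and x: "x \<in> space (PiM ({..<d} - {j}) (\<lambda>_. std_gauss))"
  shows "(\<lambda>(y, w). h (x(j:=y), (w, s))) \<in> borel_measurable (std_gauss \<Otimes>\<^sub>M std_gauss)"
proof -
  have upd: "(\<lambda>y. x(j:=y)) \<in> measurable std_gauss (PiM {..<d} (\<lambda>_. std_gauss))"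
  proof -
    have "(\<lambda>y. x(j:=y)) \<in> measurable std_gauss (PiM (insert j ({..<d} - {j})) (\<lambda>_. std_gauss))"
      by (rule measurable_component_update[OF x]) simp
    moreover have "insert j ({..<d} - {j}) = {..<d}" using j by auto
    ultimately show ?thesis by simp
  qed
  have m0: "(\<lambda>p. (x(j:=fst p), (snd p, s))) \<in> measurable (std_gauss \<Otimes>\<^sub>M std_gauss) (rowM d)"
    unfolding rowM_def
  proof (rule measurable_Pair)
    show "(\<lambda>p. x(j := fst p)) \<in> measurable (std_gauss \<Otimes>\<^sub>M std_gauss) (PiM {..<d} (\<lambda>_. std_gauss))"
      using measurable_compose[OF measurable_fst upd] by blast
    show "(\<lambda>p. (snd p, s)) \<in> measurable (std_gauss \<Otimes>\<^sub>M std_gauss) (std_gauss \<Otimes>\<^sub>M rademacher)"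
      by (rule measurable_Pair) (auto simp: measurable_snd)
  qed
  have m: "(\<lambda>(y, w). (x(j:=y), (w, s))) \<in> measurable (std_gauss \<Otimes>\<^sub>M std_gauss) (rowM d)"
    using m0 by (simp add: case_prod_beta')
  show ?thesis using measurable_compose[OF m h] by (simp add: case_prod_beta')
qed

lemma row_Phi_meas:
  assumes j: "j < d" and h: "h \<in> borel_measurable (rowM d)"
    and x: "x \<in> space (PiM ({..<d} - {j}) (\<lambda>_. std_gauss))"
  shows "(\<lambda>y. \<integral>\<^sup>+ w. (h (x(j:=y), (w, 1)) + h (x(j:=y), (w, -1))) / 2 \<partial>std_gauss) \<in> borel_measurable borel"
proof -
  have "(\<lambda>y. \<integral>\<^sup>+ w. (h (x(j:=y), (w, 1)) + h (x(j:=y), (w, -1))) / 2 \<partial>std_gauss) \<in> borel_measurable std_gauss"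
  proof (rule sigma_finite_measure.borel_measurable_nn_integral)
    show "sigma_finite_measure std_gauss" by (simp add: prob_space_imp_sigma_finite)
    show "(\<lambda>(y, w). (h (x(j:=y), (w, 1)) + h (x(j:=y), (w, -1))) / 2) \<in> borel_measurable (std_gauss \<Otimes>\<^sub>M std_gauss)"
      using row_slice_meas[OF j h x, of 1] row_slice_meas[OF j h x, of "-1"]
      by (simp add: case_prod_beta')
  qed
  then show ?thesis by (simp add: measurable_cong_sets[OF sets_std_gauss refl])
qed

lemma Dv_upd_neg:
  assumes j: "j < d" and M: "inMr j (x(j:=y), p)"
  shows "Dv d \<beta> \<eta> j (x(j:=-y), p) = - Dv d \<beta> \<eta> j (x(j:=y), p)"
    and "inMr j (x(j:=-y), p)"
proof -
  obtain w s where p: "p = (w, s)" by (cases p)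
  define S0 where "S0 = (\<Sum>k\<in>{..<d} - {j}. x k * \<beta> k)"
  have sum: "(\<Sum>k<d. (x(j:=z)) k * \<beta> k) = z * \<beta> j + S0" for z
  proof -
    have "(\<Sum>k<d. (x(j:=z)) k * \<beta> k) = (x(j:=z)) j * \<beta> j + (\<Sum>k\<in>{..<d} - {j}. (x(j:=z)) k * \<beta> k)"
      using j by (subst sum.remove[of _ j]) auto
    also have "(\<Sum>k\<in>{..<d} - {j}. (x(j:=z)) k * \<beta> k) = S0"
      unfolding S0_def by (intro sum.cong) auto
    finally show ?thesis by simp
  qed
  have sy: "s * y \<noteq> 0" using M by (auto simp: inMr_def p)
  then have "s \<noteq> 0" "y \<noteq> 0" by auto
  show "Dv d \<beta> \<eta> j (x(j:=-y), p) = - Dv d \<beta> \<eta> j (x(j:=y), p)"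
    unfolding Dv_def p fst_conv snd_conv sum using sy by (simp add: field_simps)
  show "inMr j (x(j:=-y), p)" using M by (simp add: inMr_def p)
qed

lemma row_sym:
  assumes j: "j < d"
  shows "emeasure (rowM d) {r\<in>space (rowM d). inMr j r \<and> e * Dv d \<beta> \<eta> j r > t}
       = emeasure (rowM d) {r\<in>space (rowM d). inMr j r \<and> e * Dv d \<beta> \<eta> j r < - t}"
proof -
  let ?S1 = "{r\<in>space (rowM d). inMr j r \<and> e * Dv d \<beta> \<eta> j r > t}"
  let ?S2 = "{r\<in>space (rowM d). inMr j r \<and> e * Dv d \<beta> \<eta> j r < - t}"
  have S1[measurable]: "?S1 \<in> sets (rowM d)" using j by measurable
  have S2[measurable]: "?S2 \<in> sets (rowM d)" using j by measurable
  have sp: "r \<in> space (rowM d)" if "x \<in> space (PiM ({..<d} - {j}) (\<lambda>_. std_gauss))" "r = (x(j:=y), p)" for x y p r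
    using that j by (auto simp: rowM_def space_pair_measure space_PiM PiE_def extensional_def)
  have "emeasure (rowM d) ?S1 = (\<integral>\<^sup>+ r. indicator ?S1 r \<partial>rowM d)" by simp
  also have "\<dots> = (\<integral>\<^sup>+ x. \<integral>\<^sup>+ y. \<integral>\<^sup>+ w. (indicator ?S1 (x(j:=y), (w, 1)) + indicator ?S1 (x(j:=y), (w, -1))) / 2
        \<partial>std_gauss \<partial>std_gauss \<partial>PiM ({..<d} - {j}) (\<lambda>_. std_gauss))"
    by (rule row_integral[OF j]) simp
  also have "\<dots> = (\<integral>\<^sup>+ x. \<integral>\<^sup>+ y. \<integral>\<^sup>+ w. (indicator ?S2 (x(j:=y), (w, 1)) + indicator ?S2 (x(j:=y), (w, -1))) / 2
        \<partial>std_gauss \<partial>std_gauss \<partial>PiM ({..<d} - {j}) (\<lambda>_. std_gauss))"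
  proof (rule nn_integral_cong)
    fix x assume x: "x \<in> space (PiM ({..<d} - {j}) (\<lambda>_. std_gauss))"
    have eq: "indicator ?S1 (x(j:=-y), p) = (indicator ?S2 (x(j:=y), p) :: ennreal)" for y p
    proof -
      have "inMr j (x(j:=-y), p) \<longleftrightarrow> inMr j (x(j:=y), p)"
        using Dv_upd_neg(2)[OF j, of x y p] Dv_upd_neg(2)[OF j, of x "-y" p] by auto
      moreover have "inMr j (x(j:=y), p) \<Longrightarrow> Dv d \<beta> \<eta> j (x(j:=-y), p) = - Dv d \<beta> \<eta> j (x(j:=y), p)"
        using Dv_upd_neg(1)[OF j] by blast
      ultimately show ?thesis
        using sp[OF x refl, of y p] sp[OF x refl, of "-y" p]
        by (auto simp: indicator_def)
    qed
    have "(\<integral>\<^sup>+ y. \<integral>\<^sup>+ w. (indicator ?S1 (x(j:=y), (w, 1)) + indicator ?S1 (x(j:=y), (w, -1))) / 2 \<partial>std_gauss \<partial>std_gauss)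
      = (\<integral>\<^sup>+ y. \<integral>\<^sup>+ w. (indicator ?S1 (x(j:=-y), (w, 1)) + indicator ?S1 (x(j:=-y), (w, -1))) / 2 \<partial>std_gauss \<partial>std_gauss)"
      using nn_integral_std_gauss_uminus[OF row_Phi_meas[OF j _ x, of "indicator ?S1"]] by simp
    also have "\<dots> = (\<integral>\<^sup>+ y. \<integral>\<^sup>+ w. (indicator ?S2 (x(j:=y), (w, 1)) + indicator ?S2 (x(j:=y), (w, -1))) / 2 \<partial>std_gauss \<partial>std_gauss)"
      by (simp add: eq)
    finally show "(\<integral>\<^sup>+ y. \<integral>\<^sup>+ w. (indicator ?S1 (x(j:=y), (w, 1)) + indicator ?S1 (x(j:=y), (w, -1))) / 2 \<partial>std_gauss \<partial>std_gauss)
      = (\<integral>\<^sup>+ y. \<integral>\<^sup>+ w. (indicator ?S2 (x(j:=y), (w, 1)) + indicator ?S2 (x(j:=y), (w, -1))) / 2 \<partial>std_gauss \<partial>std_gauss)" .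
  qed
  also have "\<dots> = (\<integral>\<^sup>+ r. indicator ?S2 r \<partial>rowM d)"
    by (rule row_integral[OF j, symmetric]) simp
  also have "\<dots> = emeasure (rowM d) ?S2" by simp
  finally show ?thesis .
qed

lemma gPi_x: "k \<in> J \<Longrightarrow> (\<lambda>x. x k) \<in> borel_measurable (PiM J (\<lambda>_. std_gauss))"
proof -
  assume "k \<in> J"
  then have "(\<lambda>a. a k) \<in> measurable (PiM J (\<lambda>_. std_gauss)) std_gauss"
    by (intro measurable_component_singleton) simp
  then show "(\<lambda>a. a k) \<in> borel_measurable (PiM J (\<lambda>_. std_gauss))"
    by (simp add: measurable_cong_sets[OF refl sets_std_gauss])
qed

lemma gPi_sum[measurable]: "(\<lambda>x. \<Sum>k\<in>J. \<beta> k * x k) \<in> borel_measurable (PiM J (\<lambda>_. std_gauss))"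
  by (intro borel_measurable_sum borel_measurable_times gPi_x measurable_const) auto

lemma snd_gauss_meas: "snd \<in> borel_measurable (M \<Otimes>\<^sub>M std_gauss)"
proof -
  have "snd \<in> measurable (M \<Otimes>\<^sub>M std_gauss) std_gauss" by (rule measurable_snd)
  then show ?thesis using measurable_cong_sets[OF refl sets_std_gauss, of "M \<Otimes>\<^sub>M std_gauss"] by blast
qed

lemma abs_set_borel: "{w::real. \<bar>a + w\<bar> \<le> b} \<in> sets borel"
proof -
  have "{w::real. \<bar>a + w\<bar> \<le> b} = {-b-a..b-a}" by (auto simp: abs_le_iff)
  then show ?thesis by simp
qed

lemma abs_set_borel': "{w::real. \<bar>w\<bar> \<le> b} \<in> sets borel"
  using abs_set_borel[of 0 b] by simp

lemma cmult_ind_gauss: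
  assumes "A \<in> sets borel"
  shows "ennreal c * (\<integral>\<^sup>+ w. indicator A w \<partial>std_gauss) = (\<integral>\<^sup>+ w. ennreal c * indicator A w \<partial>std_gauss)"
  using assms by (simp add: nn_integral_cmult_indicator)

lemma cmult_gen:
  assumes "f \<in> borel_measurable M"
  shows "ennreal c * (\<integral>\<^sup>+x. f x \<partial>M) = (\<integral>\<^sup>+x. ennreal c * f x \<partial>M)"
  by (rule nn_integral_cmult[OF assms, symmetric])

lemma std_gauss_interval:
  assumes "\<bar>b\<bar> \<le> 2" "0 < u"
  shows "ennreal (kappa2 * min u 1) \<le> (\<integral>\<^sup>+ w. indicator {w. \<bar>b + w\<bar> \<le> u} w \<partial>std_gauss)"
proof -
  have "ennreal (kappa2 * min u 1 / 1) \<le>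
    (\<integral>\<^sup>+ y. indicator {y. \<bar>y + b\<bar> \<le> u} y * ennreal (normal_density 0 1 y) \<partial>lborel)"
    by (rule gauss_interval_lower) (use assms in auto)
  also have "\<dots> = (\<integral>\<^sup>+ w. indicator {w. \<bar>b + w\<bar> \<le> u} w \<partial>std_gauss)"
    by (subst nn_integral_std_gauss) (auto simp: mult.commute add.commute)
  finally show ?thesis by simp
qed

lemma anti_conc:
  fixes \<beta> :: "nat \<Rightarrow> real"
  assumes J: "finite J" and eta: "\<bar>\<eta>\<bar> \<le> 1" and u: "0 < u" "u \<le> s" and s1: "1 \<le> s"
    and vs: "(\<Sum>k\<in>J. (\<beta> k)\<^sup>2) \<le> s\<^sup>2"
  shows "ennreal (kappa2\<^sup>2 * u / s) \<le>
    (\<integral>\<^sup>+ x. \<integral>\<^sup>+ w. indicator {w. \<bar>(\<Sum>k\<in>J. \<beta> k * x k) + \<eta> + w\<bar> \<le> u} w \<partial>std_gauss \<partial>PiM J (\<lambda>_. std_gauss))"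
proof -
  let ?P = "PiM J (\<lambda>_. std_gauss)"
  let ?S = "\<lambda>x. \<Sum>k\<in>J. \<beta> k * x k"
  define v where "v = (\<Sum>k\<in>J. (\<beta> k)\<^sup>2)"
  interpret P: prob_space ?P by simp
  have k2: "0 < kappa2" "kappa2 \<le> 1" using kappa2_pos kappa2_le1 .
  have s0: "0 < s" using s1 by simp
  show ?thesis
  proof (cases "1 \<le> v")
    case True
    have nz: "\<exists>k\<in>J. \<beta> k \<noteq> 0"
    proof (rule ccontr)
      assume "\<not> (\<exists>k\<in>J. \<beta> k \<noteq> 0)"
      then have "v = 0" unfolding v_def by simp
      with True show False by simp
    qed
    have dist: "distributed ?P lborel ?S (\<lambda>y. ennreal (normal_density 0 (sqrt v) y))"
      unfolding v_def by (rule gauss_sum_distributed[OF J nz])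
    have sv: "1 \<le> sqrt v" "sqrt v \<le> s"
      using True vs s0 by (auto simp: v_def real_le_lsqrt real_le_rsqrt)
    define C where "C = kappa2 * min u (sqrt v) / sqrt v"
    have C: "kappa2 * u / s \<le> C"
    proof (cases "u \<le> sqrt v")
      case True
      then have "u / s \<le> u / sqrt v" using sv u by (intro divide_left_mono) auto
      moreover have "C = kappa2 * (u / sqrt v)" unfolding C_def using True by simp
      ultimately show ?thesis using mult_left_mono[of "u / s" "u / sqrt v" kappa2] k2 by simp
    next
      case False
      then have "u / s \<le> 1" using u by simp
      moreover have "C = kappa2" unfolding C_def using False sv by simp
      ultimately show ?thesis using mult_left_mono[of "u / s" 1 kappa2] k2 by simp
    qed
    have meas: "(\<lambda>(x, w). indicator {w. \<bar>?S x + \<eta> + w\<bar> \<le> u} w :: ennreal) \<in> borel_measurable (?P \<Otimes>\<^sub>M std_gauss)"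
    proof -
      have "(\<lambda>p. ?S (fst p) + \<eta> + snd p) \<in> borel_measurable (?P \<Otimes>\<^sub>M std_gauss)"
        by (intro borel_measurable_add measurable_compose[OF measurable_fst gPi_sum] measurable_const)
           (auto intro: snd_gauss_meas)
      then have "(\<lambda>p. indicator {-u..u} (?S (fst p) + \<eta> + snd p) :: ennreal) \<in> borel_measurable (?P \<Otimes>\<^sub>M std_gauss)"
        using measurable_compose[OF _ borel_measurable_indicator[OF atLeastAtMost_borel]] by blast
      then show ?thesis by (simp add: case_prod_beta' indicator_def abs_le_iff)
    qed
    have Cpos: "0 \<le> C" unfolding C_def using k2 u sv by simp
    have "ennreal (C * kappa2) = ennreal C * ennreal (kappa2 * min 1 1)"
      using Cpos k2 by (simp add: ennreal_mult)
    also have "\<dots> \<le> ennreal C * (\<integral>\<^sup>+ w. indicator {w. \<bar>\<eta> + w\<bar> \<le> 1} w \<partial>std_gauss)"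
      by (intro mult_left_mono std_gauss_interval) (use eta in auto)
    also have "\<dots> = (\<integral>\<^sup>+ w. ennreal C * indicator {w. \<bar>\<eta> + w\<bar> \<le> 1} w \<partial>std_gauss)"
      by (rule cmult_ind_gauss[OF abs_set_borel])
    also have "\<dots> \<le> (\<integral>\<^sup>+ w. \<integral>\<^sup>+ x. indicator {w. \<bar>?S x + \<eta> + w\<bar> \<le> u} w \<partial>?P \<partial>std_gauss)"
    proof (intro nn_integral_mono)
      fix w
      show "ennreal C * indicator {w. \<bar>\<eta> + w\<bar> \<le> 1} w \<le> (\<integral>\<^sup>+ x. indicator {w. \<bar>?S x + \<eta> + w\<bar> \<le> u} w \<partial>?P)"
      proof (cases "\<bar>\<eta> + w\<bar> \<le> 1")
        case True
        have "ennreal C \<le> (\<integral>\<^sup>+ z. indicator {z. \<bar>z + (\<eta> + w)\<bar> \<le> u} z * ennreal (normal_density 0 (sqrt v) z) \<partial>lborel)"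
          unfolding C_def
          by (rule gauss_interval_lower) (use True sv u in linarith)+
        also have "\<dots> = (\<integral>\<^sup>+ z. ennreal (normal_density 0 (sqrt v) z) * indicator {z. \<bar>z + (\<eta> + w)\<bar> \<le> u} z \<partial>lborel)"
          by (simp add: mult.commute)
        also have "\<dots> = (\<integral>\<^sup>+ x. indicator {z. \<bar>z + (\<eta> + w)\<bar> \<le> u} (?S x) \<partial>?P)"
          by (rule distributed_nn_integral[OF dist]) simp
        also have "\<dots> = (\<integral>\<^sup>+ x. indicator {w. \<bar>?S x + \<eta> + w\<bar> \<le> u} w \<partial>?P)"
          by (intro nn_integral_cong) (simp add: indicator_def add.assoc)
        finally show ?thesis using True by simp
      qed simp
    qed
    also have "\<dots> = (\<integral>\<^sup>+ x. \<integral>\<^sup>+ w. indicator {w. \<bar>?S x + \<eta> + w\<bar> \<le> u} w \<partial>std_gauss \<partial>?P)"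
      by (rule pair_sigma_finite.Fubini'[OF _ meas])
         (simp add: pair_sigma_finite_def prob_space_imp_sigma_finite)
    finally have "ennreal (C * kappa2) \<le> (\<integral>\<^sup>+ x. \<integral>\<^sup>+ w. indicator {w. \<bar>?S x + \<eta> + w\<bar> \<le> u} w \<partial>std_gauss \<partial>?P)" .
    moreover have "kappa2\<^sup>2 * u / s \<le> C * kappa2"
    proof -
      have "kappa2\<^sup>2 * u / s = (kappa2 * u / s) * kappa2" by (simp add: power2_eq_square)
      also have "\<dots> \<le> C * kappa2" using C k2 by (intro mult_right_mono) auto
      finally show ?thesis .
    qed
    ultimately show ?thesis by (meson ennreal_leI order_trans)
  next
    case False
    have PS: "ennreal kappa2 \<le> (\<integral>\<^sup>+ x. indicator {x. \<bar>?S x\<bar> \<le> 1} x \<partial>?P)"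
    proof (cases "\<exists>k\<in>J. \<beta> k \<noteq> 0")
      case True
      have dist: "distributed ?P lborel ?S (\<lambda>y. ennreal (normal_density 0 (sqrt v) y))"
        unfolding v_def by (rule gauss_sum_distributed[OF J True])
      have vpos: "0 < v"
      proof -
        obtain k where k: "k \<in> J" "\<beta> k \<noteq> 0" using True by blast
        show ?thesis unfolding v_def by (rule sum_pos2[OF J k(1)]) (use k in auto)
      qed
      have "kappa2 = kappa2 * min 1 (sqrt v) / sqrt v"
      proof -
        have "sqrt v \<le> 1" using False by simp
        then have "min 1 (sqrt v) = sqrt v" by simp
        then show ?thesis using vpos by simp
      qed
      then have "ennreal kappa2 = ennreal (kappa2 * min 1 (sqrt v) / sqrt v)" by simp
      also have "\<dots> \<le> (\<integral>\<^sup>+ z. indicator {z. \<bar>z + 0\<bar> \<le> 1} z * ennreal (normal_density 0 (sqrt v) z) \<partial>lborel)"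
        by (rule gauss_interval_lower) (use vpos in auto)
      also have "\<dots> = (\<integral>\<^sup>+ z. ennreal (normal_density 0 (sqrt v) z) * indicator {z. \<bar>z + 0\<bar> \<le> 1} z \<partial>lborel)"
        by (simp add: mult.commute)
      also have "\<dots> = (\<integral>\<^sup>+ x. indicator {z. \<bar>z + 0\<bar> \<le> 1} (?S x) \<partial>?P)"
        by (rule distributed_nn_integral[OF dist]) (simp add: abs_set_borel')
      also have "\<dots> = (\<integral>\<^sup>+ x. indicator {x. \<bar>?S x\<bar> \<le> 1} x \<partial>?P)"
        by (intro nn_integral_cong) (simp add: indicator_def)
      finally show ?thesis .
    next
      case False
      then have "\<And>x. ?S x = 0" by simp
      then have "(\<integral>\<^sup>+ x. indicator {x. \<bar>?S x\<bar> \<le> 1} x \<partial>?P) = (\<integral>\<^sup>+ x. 1 \<partial>?P)"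
        by (intro nn_integral_cong) (simp add: indicator_def)
      also have "\<dots> = 1" by (simp add: P.emeasure_space_1)
      finally show ?thesis using k2 by simp
    qed
    have indS_meas: "(\<lambda>x. indicator {x. \<bar>?S x\<bar> \<le> 1} x :: ennreal) \<in> borel_measurable ?P"
    proof -
      have "(\<lambda>x. indicator {z. \<bar>z\<bar> \<le> 1} (?S x) :: ennreal) \<in> borel_measurable ?P"
        by (rule measurable_compose[OF gPi_sum borel_measurable_indicator[OF abs_set_borel']])
      moreover have "(\<lambda>x. indicator {x. \<bar>?S x\<bar> \<le> 1} x :: ennreal) = (\<lambda>x. indicator {z. \<bar>z\<bar> \<le> 1} (?S x))"
        by (auto simp: indicator_def)
      ultimately show ?thesis by metis
    qed
    have "ennreal (kappa2 * min u 1 * kappa2) = ennreal (kappa2 * min u 1) * ennreal kappa2"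
      using k2 u by (simp add: ennreal_mult)
    also have "\<dots> \<le> ennreal (kappa2 * min u 1) * (\<integral>\<^sup>+ x. indicator {x. \<bar>?S x\<bar> \<le> 1} x \<partial>?P)"
      by (intro mult_left_mono PS) simp
    also have "\<dots> = (\<integral>\<^sup>+ x. ennreal (kappa2 * min u 1) * indicator {x. \<bar>?S x\<bar> \<le> 1} x \<partial>?P)"
      by (rule cmult_gen[OF indS_meas])
    also have "\<dots> \<le> (\<integral>\<^sup>+ x. \<integral>\<^sup>+ w. indicator {w. \<bar>?S x + \<eta> + w\<bar> \<le> u} w \<partial>std_gauss \<partial>?P)"
    proof (intro nn_integral_mono)
      fix x
      show "ennreal (kappa2 * min u 1) * indicator {x. \<bar>?S x\<bar> \<le> 1} x \<le> (\<integral>\<^sup>+ w. indicator {w. \<bar>?S x + \<eta> + w\<bar> \<le> u} w \<partial>std_gauss)"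
      proof (cases "\<bar>?S x\<bar> \<le> 1")
        case True
        then have "\<bar>?S x + \<eta>\<bar> \<le> 2" using eta by linarith
        from std_gauss_interval[OF this u(1)] True show ?thesis by simp
      qed simp
    qed
    finally have "ennreal (kappa2 * min u 1 * kappa2) \<le> (\<integral>\<^sup>+ x. \<integral>\<^sup>+ w. indicator {w. \<bar>?S x + \<eta> + w\<bar> \<le> u} w \<partial>std_gauss \<partial>?P)" .
    moreover have "kappa2\<^sup>2 * u / s \<le> kappa2 * min u 1 * kappa2"
    proof -
      have a: "u / s \<le> u / 1" by (rule divide_left_mono) (use u s1 in auto)
      have b: "u / s \<le> 1" using u s1 by simp
      have m: "u / s \<le> min u 1" using a b by simp
      have "kappa2\<^sup>2 * u / s = (kappa2 * kappa2) * (u / s)" by (simp add: power2_eq_square)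
      also have "\<dots> \<le> (kappa2 * kappa2) * min u 1" by (intro mult_left_mono m) (use k2 in auto)
      also have "\<dots> = kappa2 * min u 1 * kappa2" by simp
      finally show ?thesis .
    qed
    ultimately show ?thesis by (meson ennreal_leI order_trans)
  qed
qed

lemma sum_upd_split:
  fixes x \<beta> :: "nat \<Rightarrow> real" and j d :: nat
  assumes j: "j < d"
  shows "(\<Sum>k<d. (x(j:=z)) k * \<beta> k) = z * \<beta> j + (\<Sum>k\<in>{..<d} - {j}. \<beta> k * x k)"
proof -
  have "(\<Sum>k<d. (x(j:=z)) k * \<beta> k) = (x(j:=z)) j * \<beta> j + (\<Sum>k\<in>{..<d} - {j}. (x(j:=z)) k * \<beta> k)"
  proof -
    have fin: "finite {..<d}" by simp
    show ?thesis using sum.remove[OF fin, of j "\<lambda>k. (x(j:=z)) k * \<beta> k"] j by simp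
  qed
  also have "(\<Sum>k\<in>{..<d} - {j}. (x(j:=z)) k * \<beta> k) = (\<Sum>k\<in>{..<d} - {j}. \<beta> k * x k)"
    by (intro sum.cong) auto
  finally show ?thesis by simp
qed

lemma Dv_formula:
  assumes j: "j < d" and sg: "\<sigma> = 1 \<or> \<sigma> = -1" and y: "y \<noteq> 0"
  shows "Dv d \<beta> \<eta> j (x(j:=y), (w, \<sigma>)) = ((\<Sum>k\<in>{..<d} - {j}. \<beta> k * x k) + \<eta> + \<sigma> * w) / y"
  using sg y unfolding Dv_def fst_conv snd_conv sum_upd_split[OF j]
  by (auto simp: field_simps)

lemma abs_ge_borel: "{y::real. a \<le> \<bar>y\<bar>} \<in> sets borel"
proof -
  have "{y::real. a \<le> \<bar>y\<bar>} = {..-a} \<union> {a..}" by auto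
  then show ?thesis by simp
qed

lemma avg_sym:
  assumes A: "A \<in> sets borel"
  shows "(\<integral>\<^sup>+w. (indicator A w + indicator A (-w)) / 2 \<partial>std_gauss) = (\<integral>\<^sup>+w. indicator A w \<partial>std_gauss)"
proof -
  have m1: "(indicator A :: real \<Rightarrow> ennreal) \<in> borel_measurable std_gauss"
    using A by (intro borel_measurable_indicator) simp
  have m1': "(indicator A :: real \<Rightarrow> ennreal) \<in> borel_measurable borel"
    using A by (intro borel_measurable_indicator) simp
  have m2: "(\<lambda>w. indicator A (-w) :: ennreal) \<in> borel_measurable std_gauss"
    using measurable_compose[OF borel_measurable_uminus[OF measurable_ident_sets[OF refl]] m1']
    by (simp add: measurable_cong_sets[OF sets_std_gauss refl] o_def)
  have "(\<integral>\<^sup>+w. (indicator A w + indicator A (-w)) / 2 \<partial>std_gauss)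
      = (\<integral>\<^sup>+w. (indicator A w + indicator A (-w)) \<partial>std_gauss) / 2"
    by (rule nn_integral_divide) (use m1 m2 in auto)
  also have "(\<integral>\<^sup>+w. (indicator A w + indicator A (-w)) \<partial>std_gauss)
      = (\<integral>\<^sup>+w. indicator A w \<partial>std_gauss) + (\<integral>\<^sup>+w. indicator A (-w) \<partial>std_gauss)"
    by (rule nn_integral_add) (use m1 m2 in auto)
  also have "(\<integral>\<^sup>+w. indicator A (-w) \<partial>std_gauss) = (\<integral>\<^sup>+w. indicator A w \<partial>std_gauss)"
    by (rule nn_integral_std_gauss_uminus[OF m1'])
  also have "((\<integral>\<^sup>+w. indicator A w \<partial>std_gauss) + (\<integral>\<^sup>+w. indicator A w \<partial>std_gauss)) / 2
      = (\<integral>\<^sup>+w. indicator A w \<partial>std_gauss)"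
  proof -
    have "\<And>X::ennreal. X + X = X * 2" by (simp add: mult_2_right)
    moreover have "\<And>X::ennreal. X * 2 / 2 = X" by (rule ennreal_mult_divide_eq) auto
    ultimately show ?thesis by simp
  qed
  finally show ?thesis .
qed

lemma q_meas:
  "(\<lambda>x. \<integral>\<^sup>+w. indicator {w. \<bar>(\<Sum>k\<in>J. \<beta> k * x k) + \<eta> + w\<bar> \<le> u} w \<partial>std_gauss)
     \<in> borel_measurable (PiM J (\<lambda>_. std_gauss))"
proof (rule sigma_finite_measure.borel_measurable_nn_integral)
  show "sigma_finite_measure std_gauss" by (simp add: prob_space_imp_sigma_finite)
  let ?P = "PiM J (\<lambda>_. std_gauss)"
  let ?S = "\<lambda>x. \<Sum>k\<in>J. \<beta> k * x k"
  have "(\<lambda>p. ?S (fst p) + \<eta> + snd p) \<in> borel_measurable (?P \<Otimes>\<^sub>M std_gauss)"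
    by (intro borel_measurable_add measurable_compose[OF measurable_fst gPi_sum] measurable_const)
       (auto intro: snd_gauss_meas)
  then have "(\<lambda>p. indicator {-u..u} (?S (fst p) + \<eta> + snd p) :: ennreal) \<in> borel_measurable (?P \<Otimes>\<^sub>M std_gauss)"
    using measurable_compose[OF _ borel_measurable_indicator[OF atLeastAtMost_borel]] by blast
  moreover have "(\<lambda>p. indicator {-u..u} (?S (fst p) + \<eta> + snd p) :: ennreal)
     = (\<lambda>(x, w). indicator {w. \<bar>?S x + \<eta> + w\<bar> \<le> u} w)"
    by (auto simp: indicator_def abs_le_iff fun_eq_iff)
  ultimately show "(\<lambda>(x, w). indicator {w. \<bar>?S x + \<eta> + w\<bar> \<le> u} w :: ennreal) \<in> borel_measurable (?P \<Otimes>\<^sub>M std_gauss)"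
    by metis
qed

lemma row_mid_lower:
  fixes \<beta> :: "nat \<Rightarrow> real"
  assumes j: "j < d" and eta: "\<bar>\<eta>\<bar> \<le> 1" and t: "0 < t" "t \<le> s"
    and s: "s = sqrt (1 + (\<Sum>k<d. (\<beta> k)\<^sup>2))"
  shows "ennreal (kappa1 * (kappa2\<^sup>2 * (t/2) / s)) \<le>
    emeasure (rowM d) {r\<in>space (rowM d). inMr j r \<and> \<bar>Dv d \<beta> \<eta> j r\<bar> \<le> t}"
proof -
  let ?T = "{r\<in>space (rowM d). inMr j r \<and> \<bar>Dv d \<beta> \<eta> j r\<bar> \<le> t}"
  let ?J = "{..<d} - {j}"
  let ?P = "PiM ?J (\<lambda>_. std_gauss)"
  let ?S = "\<lambda>x. \<Sum>k\<in>?J. \<beta> k * x k"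
  define u where "u = t / 2"
  have u: "0 < u" "u \<le> s" using t by (auto simp: u_def)
  have Tm[measurable]: "?T \<in> sets (rowM d)" using j by measurable
  have sum0: "0 \<le> (\<Sum>k<d. (\<beta> k)\<^sup>2)" by (intro sum_nonneg) auto
  have s1: "1 \<le> s" unfolding s using sum0 by simp
  have vs: "(\<Sum>k\<in>?J. (\<beta> k)\<^sup>2) \<le> s\<^sup>2"
  proof -
    have "(\<Sum>k\<in>?J. (\<beta> k)\<^sup>2) \<le> (\<Sum>k<d. (\<beta> k)\<^sup>2)" by (intro sum_mono2) auto
    also have "\<dots> \<le> s\<^sup>2" unfolding s using sum0 by simp
    finally show ?thesis .
  qed
  have k1: "0 < kappa1" by (rule kappa1_pos)
  have key: "ennreal kappa1 * (\<integral>\<^sup>+w. indicator {w. \<bar>?S x + \<eta> + w\<bar> \<le> u} w \<partial>std_gauss)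
      \<le> (\<integral>\<^sup>+ y. \<integral>\<^sup>+ w. (indicator ?T (x(j:=y), (w, 1)) + indicator ?T (x(j:=y), (w, -1))) / 2 \<partial>std_gauss \<partial>std_gauss)"
    if x: "x \<in> space ?P" for x
  proof -
    define A where "A = {w. \<bar>?S x + \<eta> + w\<bar> \<le> u}"
    define Y where "Y = {y::real. 1/2 \<le> \<bar>y\<bar>}"
    have A: "A \<in> sets borel" unfolding A_def by (rule abs_set_borel)
    have Y: "Y \<in> sets borel" unfolding Y_def by (rule abs_ge_borel)
    have inT: "(x(j:=y), (w, \<sigma>)) \<in> ?T"
      if y: "y \<in> Y" and sg: "\<sigma> = 1 \<or> \<sigma> = -1" and a: "\<bar>?S x + \<eta> + \<sigma> * w\<bar> \<le> u" for y w \<sigma>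
    proof -
      have y0: "y \<noteq> 0" "1/2 \<le> \<bar>y\<bar>" using y by (auto simp: Y_def)
      have sp: "(x(j:=y), (w, \<sigma>)) \<in> space (rowM d)"
        using x j by (auto simp: rowM_def space_pair_measure space_PiM PiE_def extensional_def)
      have inM: "inMr j (x(j:=y), (w, \<sigma>))" using sg y0 by (auto simp: inMr_def)
      have "\<bar>Dv d \<beta> \<eta> j (x(j:=y), (w, \<sigma>))\<bar> = \<bar>?S x + \<eta> + \<sigma> * w\<bar> / \<bar>y\<bar>"
        by (subst Dv_formula[OF j sg y0(1)]) simp
      also have "\<dots> \<le> u / (1/2)"
        by (rule frac_le) (use a y0 in auto)
      also have "\<dots> = t" by (simp add: u_def)
      finally show ?thesis using sp inM by simp
    qed
    have pw: "indicator Y y * ((indicator A w + indicator A (-w)) / 2)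
        \<le> (indicator ?T (x(j:=y), (w, 1)) + indicator ?T (x(j:=y), (w, -1))) / (2::ennreal)" for y w
    proof (cases "y \<in> Y")
      case True
      have "indicator A w \<le> (indicator ?T (x(j:=y), (w, 1)) :: ennreal)"
        using inT[OF True, of 1 w] by (auto simp: indicator_def A_def)
      moreover have "indicator A (-w) \<le> (indicator ?T (x(j:=y), (w, -1)) :: ennreal)"
        using inT[OF True, of "-1" w] by (auto simp: indicator_def A_def)
      ultimately show ?thesis using True by (auto intro!: divide_right_mono_ennreal add_mono)
    qed simp
    have avgm: "(\<lambda>w. (indicator A w + indicator A (-w)) / 2 :: ennreal) \<in> borel_measurable std_gauss"
    proof -
      have m1': "(indicator A :: real \<Rightarrow> ennreal) \<in> borel_measurable borel"
        using A by (intro borel_measurable_indicator) simp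
      have m2: "(\<lambda>w. indicator A (-w) :: ennreal) \<in> borel_measurable borel"
        using measurable_compose[OF borel_measurable_uminus[OF measurable_ident_sets[OF refl]] m1']
        by (simp add: o_def)
      have "(\<lambda>w. (indicator A w + indicator A (-w)) / 2 :: ennreal) \<in> borel_measurable borel"
        using m1' m2 by (intro borel_measurable_divide_ennreal borel_measurable_add) auto
      then show ?thesis by (simp add: measurable_cong_sets[OF sets_std_gauss refl])
    qed
    have Ym: "(indicator Y :: real \<Rightarrow> ennreal) \<in> borel_measurable std_gauss"
      using Y by (intro borel_measurable_indicator) simp
    define q where "q = (\<integral>\<^sup>+w. indicator A w \<partial>std_gauss)"
    have "ennreal kappa1 * q \<le> (\<integral>\<^sup>+ y. indicator Y y \<partial>std_gauss) * q"
      using gauss_tail_lower by (intro mult_right_mono) (auto simp: Y_def)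
    also have "\<dots> = (\<integral>\<^sup>+ y. indicator Y y * q \<partial>std_gauss)"
      by (rule nn_integral_multc[OF Ym, symmetric])
    also have "\<dots> = (\<integral>\<^sup>+ y. indicator Y y * (\<integral>\<^sup>+w. (indicator A w + indicator A (-w)) / 2 \<partial>std_gauss) \<partial>std_gauss)"
      unfolding q_def avg_sym[OF A] ..
    also have "\<dots> = (\<integral>\<^sup>+ y. \<integral>\<^sup>+w. indicator Y y * ((indicator A w + indicator A (-w)) / 2) \<partial>std_gauss \<partial>std_gauss)"
      by (intro nn_integral_cong nn_integral_cmult[OF avgm, symmetric])
    also have "\<dots> \<le> (\<integral>\<^sup>+ y. \<integral>\<^sup>+ w. (indicator ?T (x(j:=y), (w, 1)) + indicator ?T (x(j:=y), (w, -1))) / 2 \<partial>std_gauss \<partial>std_gauss)"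
      by (intro nn_integral_mono pw)
    finally show ?thesis unfolding q_def A_def .
  qed
  have qm: "(\<lambda>x. \<integral>\<^sup>+w. indicator {w. \<bar>?S x + \<eta> + w\<bar> \<le> u} w \<partial>std_gauss) \<in> borel_measurable ?P"
    by (rule q_meas)
  have "ennreal (kappa1 * (kappa2\<^sup>2 * (t/2) / s)) = ennreal kappa1 * ennreal (kappa2\<^sup>2 * u / s)"
  proof -
    have "0 \<le> kappa2\<^sup>2 * u / s" using u s1 by simp
    then show ?thesis using k1 by (simp add: ennreal_mult[symmetric] u_def)
  qed
  also have "\<dots> \<le> ennreal kappa1 * (\<integral>\<^sup>+ x. \<integral>\<^sup>+ w. indicator {w. \<bar>?S x + \<eta> + w\<bar> \<le> u} w \<partial>std_gauss \<partial>?P)"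
    by (intro mult_left_mono anti_conc) (use eta u s1 vs in auto)
  also have "\<dots> = (\<integral>\<^sup>+ x. ennreal kappa1 * (\<integral>\<^sup>+ w. indicator {w. \<bar>?S x + \<eta> + w\<bar> \<le> u} w \<partial>std_gauss) \<partial>?P)"
    by (rule nn_integral_cmult[OF qm, symmetric])
  also have "\<dots> \<le> (\<integral>\<^sup>+ x. \<integral>\<^sup>+ y. \<integral>\<^sup>+ w. (indicator ?T (x(j:=y), (w, 1)) + indicator ?T (x(j:=y), (w, -1))) / 2
        \<partial>std_gauss \<partial>std_gauss \<partial>?P)"
    by (intro nn_integral_mono key)
  also have "\<dots> = (\<integral>\<^sup>+ r. indicator ?T r \<partial>rowM d)"
    by (rule row_integral[OF j, symmetric]) simp
  also have "\<dots> = emeasure (rowM d) ?T" by simp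
  finally show ?thesis .
qed

definition Bset where "Bset d \<beta> \<eta> j e t = {r\<in>space (rowM d). inMr j r \<and> e * Dv d \<beta> \<eta> j r > t}"
definition Aset where "Aset d \<beta> \<eta> j e t = {r\<in>space (rowM d). inMr j r \<and> e * Dv d \<beta> \<eta> j r \<le> t}"
definition Midset where "Midset d \<beta> \<eta> j t = {r\<in>space (rowM d). inMr j r \<and> \<bar>Dv d \<beta> \<eta> j r\<bar> \<le> t}"
definition Zf where "Zf d \<beta> \<eta> j e t r = indicator (Bset d \<beta> \<eta> j e t) r - (indicator (Aset d \<beta> \<eta> j e t) r :: real)"

lemma sets_BAM[measurable]:
  assumes "j < d"
  shows "Bset d \<beta> \<eta> j e t \<in> sets (rowM d)" "Aset d \<beta> \<eta> j e t \<in> sets (rowM d)"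
    "Midset d \<beta> \<eta> j t \<in> sets (rowM d)"
  unfolding Bset_def Aset_def Midset_def using assms by measurable

lemma Zf_meas[measurable]:
  assumes "j < d"
  shows "Zf d \<beta> \<eta> j e t \<in> borel_measurable (rowM d)"
  unfolding Zf_def using sets_BAM[OF assms] by (intro borel_measurable_diff borel_measurable_indicator)

lemma prob_A_ge:
  assumes j: "j < d" and e: "e = 1 \<or> e = -1" and t0: "0 \<le> t"
  shows "measure (rowM d) (Bset d \<beta> \<eta> j e t) + measure (rowM d) (Midset d \<beta> \<eta> j t)
     \<le> measure (rowM d) (Aset d \<beta> \<eta> j e t)"
proof -
  interpret R: prob_space "rowM d" by simp
  let ?C = "{r\<in>space (rowM d). inMr j r \<and> e * Dv d \<beta> \<eta> j r < - t}"
  have Cm: "?C \<in> sets (rowM d)" using j by measurable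
  have CB: "measure (rowM d) ?C = measure (rowM d) (Bset d \<beta> \<eta> j e t)"
    unfolding Bset_def measure_def using row_sym[OF j, where e=e and \<beta>=\<beta> and \<eta>=\<eta> and t=t] by simp
  have disj: "?C \<inter> Midset d \<beta> \<eta> j t = {}"
    using e by (auto simp: Midset_def abs_mult)
  have "measure (rowM d) ?C + measure (rowM d) (Midset d \<beta> \<eta> j t) = measure (rowM d) (?C \<union> Midset d \<beta> \<eta> j t)"
    by (rule R.finite_measure_Union[symmetric]) (use Cm sets_BAM[OF j] disj in auto)
  also have "\<dots> \<le> measure (rowM d) (Aset d \<beta> \<eta> j e t)"
  proof (rule R.finite_measure_mono)
    show "?C \<union> Midset d \<beta> \<eta> j t \<subseteq> Aset d \<beta> \<eta> j e t"
      using e t0 by (auto simp: Midset_def Aset_def abs_le_iff)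
  qed (use sets_BAM[OF j] in auto)
  finally show ?thesis using CB by simp
qed

lemma expectation_Zf:
  assumes j: "j < d"
  shows "prob_space.expectation (rowM d) (Zf d \<beta> \<eta> j e t)
     = measure (rowM d) (Bset d \<beta> \<eta> j e t) - measure (rowM d) (Aset d \<beta> \<eta> j e t)"
proof -
  interpret R: prob_space "rowM d" by simp
  show ?thesis unfolding Zf_def
    using sets_BAM[OF j]
    by (subst Bochner_Integration.integral_diff) (auto intro!: integrable_real_indicator simp: R.emeasure_finite less_top[symmetric])
qed

lemma row_mgf:
  assumes j: "j < d" and e: "e = 1 \<or> e = -1" and l: "0 < l" and t0: "0 \<le> t"
  shows "(\<integral>\<^sup>+ r. ennreal (exp (l * Zf d \<beta> \<eta> j e t r)) \<partial>rowM d)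
     \<le> ennreal (exp (- l * measure (rowM d) (Midset d \<beta> \<eta> j t) + l\<^sup>2 / 2))"
proof -
  interpret R: prob_space "rowM d" by simp
  let ?Z = "Zf d \<beta> \<eta> j e t"
  have rv: "?Z \<in> borel_measurable (rowM d)" by (rule Zf_meas[OF j])
  interpret I: interval_bounded_random_variable "rowM d" ?Z "-1" 1
    apply unfold_locales
     apply (rule rv)
    apply (intro AE_I2) apply (auto simp: Zf_def indicator_def)
    done
  define EZ where "EZ = R.expectation ?Z"
  have EZ: "EZ \<le> - measure (rowM d) (Midset d \<beta> \<eta> j t)"
    unfolding EZ_def expectation_Zf[OF j] using prob_A_ge[OF j e t0, of \<beta> \<eta>] by simp
  have H: "(\<integral>\<^sup>+ r. ennreal (exp (l * (?Z r - EZ))) \<partial>rowM d) \<le> ennreal (exp (l\<^sup>2 * (1 - - 1)\<^sup>2 / 8))"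
    unfolding EZ_def by (rule I.Hoeffdings_lemma_nn_integral[OF l])
  have "(\<integral>\<^sup>+ r. ennreal (exp (l * ?Z r)) \<partial>rowM d)
      = (\<integral>\<^sup>+ r. ennreal (exp (l * EZ)) * ennreal (exp (l * (?Z r - EZ))) \<partial>rowM d)"
    by (intro nn_integral_cong) (simp add: ennreal_mult[symmetric] mult_exp_exp algebra_simps)
  also have "\<dots> = ennreal (exp (l * EZ)) * (\<integral>\<^sup>+ r. ennreal (exp (l * (?Z r - EZ))) \<partial>rowM d)"
    by (rule nn_integral_cmult) (use j in measurable)
  also have "\<dots> \<le> ennreal (exp (l * EZ)) * ennreal (exp (l\<^sup>2 * (1 - - 1)\<^sup>2 / 8))"
    by (intro mult_left_mono H) simp
  also have "\<dots> = ennreal (exp (l * EZ + l\<^sup>2 / 2))"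
    by (simp add: ennreal_mult[symmetric] mult_exp_exp)
  also have "\<dots> \<le> ennreal (exp (- l * measure (rowM d) (Midset d \<beta> \<eta> j t) + l\<^sup>2 / 2))"
    using mult_left_mono[OF EZ, of l] l by (intro ennreal_leI) simp
  finally show ?thesis .
qed

lemma measurable_rademacher_ennreal[measurable]: "f \<in> measurable rademacher (borel :: ennreal measure)"
  by (simp add: measurable_def)

interpretation radP: product_sigma_finite "\<lambda>_::nat. rademacher"
  by (auto simp: product_sigma_finite_def prob_space_imp_sigma_finite)

interpretation rowPiP: product_sigma_finite "\<lambda>_::nat. PiM {..<d} (\<lambda>_::nat. std_gauss)"
  by (auto simp: product_sigma_finite_def prob_space_imp_sigma_finite)

lemma prob_space_cwm[simp, intro]: "prob_space (cwm_space n d)"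
  unfolding cwm_space_def
  by (intro prob_space_pair prob_space_PiM) auto

lemma rowmap_meas:
  assumes i: "i < n"
  shows "(\<lambda>\<omega>. (fst \<omega> i, (fst (snd \<omega>) i, snd (snd \<omega>) i))) \<in> measurable (cwm_space n d) (rowM d)"
  unfolding cwm_space_def rowM_def
proof (intro measurable_Pair)
  show "(\<lambda>\<omega>. fst \<omega> i) \<in> measurable (PiM {..<n} (\<lambda>i. PiM {..<d} (\<lambda>j. std_gauss)) \<Otimes>\<^sub>M (PiM {..<n} (\<lambda>i. std_gauss) \<Otimes>\<^sub>M PiM {..<n} (\<lambda>i. rademacher))) (PiM {..<d} (\<lambda>_. std_gauss))"
    by (rule measurable_compose[OF measurable_fst])
       (use measurable_component_singleton[of i "{..<n}" "\<lambda>i. PiM {..<d} (\<lambda>j. std_gauss)"] i in simp)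
  show "(\<lambda>\<omega>. fst (snd \<omega>) i) \<in> measurable (PiM {..<n} (\<lambda>i. PiM {..<d} (\<lambda>j. std_gauss)) \<Otimes>\<^sub>M (PiM {..<n} (\<lambda>i. std_gauss) \<Otimes>\<^sub>M PiM {..<n} (\<lambda>i. rademacher))) std_gauss"
    by (rule measurable_compose[OF measurable_snd], rule measurable_compose[OF measurable_fst])
       (use measurable_component_singleton[of i "{..<n}" "\<lambda>i. std_gauss"] i in simp)
  show "(\<lambda>\<omega>. snd (snd \<omega>) i) \<in> measurable (PiM {..<n} (\<lambda>i. PiM {..<d} (\<lambda>j. std_gauss)) \<Otimes>\<^sub>M (PiM {..<n} (\<lambda>i. std_gauss) \<Otimes>\<^sub>M PiM {..<n} (\<lambda>i. rademacher))) rademacher"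
    by (rule measurable_compose[OF measurable_snd], rule measurable_compose[OF measurable_snd])
       (use measurable_component_singleton[of i "{..<n}" "\<lambda>i. rademacher"] i in simp)
qed

lemma rowM_Pair_meas:
  assumes h: "h \<in> borel_measurable (rowM d)" and x: "x \<in> space (PiM {..<d} (\<lambda>_. std_gauss))"
  shows "(\<lambda>(w, s). h (x, (w, s))) \<in> borel_measurable (std_gauss \<Otimes>\<^sub>M rademacher)"
proof -
  have "(\<lambda>p. (x, p)) \<in> measurable (std_gauss \<Otimes>\<^sub>M rademacher) (rowM d)"
    unfolding rowM_def using x by (intro measurable_Pair measurable_const measurable_ident_sets) auto
  from measurable_compose[OF this h] show ?thesis by (simp add: case_prod_beta')
qed

lemma row_iter:
  assumes h: "h \<in> borel_measurable (rowM d)"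
  shows "(\<integral>\<^sup>+ r. h r \<partial>rowM d) = (\<integral>\<^sup>+ x. \<integral>\<^sup>+ w. \<integral>\<^sup>+ s. h (x, (w, s)) \<partial>rademacher \<partial>std_gauss \<partial>PiM {..<d} (\<lambda>_. std_gauss))"
proof -
  have h': "h \<in> borel_measurable (PiM {..<d} (\<lambda>_. std_gauss) \<Otimes>\<^sub>M (std_gauss \<Otimes>\<^sub>M rademacher))"
    using h by (simp add: rowM_def)
  have "(\<integral>\<^sup>+ r. h r \<partial>rowM d) = (\<integral>\<^sup>+ x. \<integral>\<^sup>+ p. h (x, p) \<partial>(std_gauss \<Otimes>\<^sub>M rademacher) \<partial>PiM {..<d} (\<lambda>_. std_gauss))"
    unfolding rowM_def by (rule sigma_finite_measure.nn_integral_fst[OF sf_gauss_rad h', symmetric])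
  also have "\<dots> = (\<integral>\<^sup>+ x. \<integral>\<^sup>+ w. \<integral>\<^sup>+ s. h (x, (w, s)) \<partial>rademacher \<partial>std_gauss \<partial>PiM {..<d} (\<lambda>_. std_gauss))"
  proof (intro nn_integral_cong)
    fix x assume x: "x \<in> space (PiM {..<d} (\<lambda>_. std_gauss))"
    have hx: "(\<lambda>p. h (x, p)) \<in> borel_measurable (std_gauss \<Otimes>\<^sub>M rademacher)"
      using rowM_Pair_meas[OF h x] by (simp add: case_prod_beta')
    show "(\<integral>\<^sup>+ p. h (x, p) \<partial>(std_gauss \<Otimes>\<^sub>M rademacher)) = (\<integral>\<^sup>+ w. \<integral>\<^sup>+ s. h (x, (w, s)) \<partial>rademacher \<partial>std_gauss)"
      by (rule sigma_finite_measure.nn_integral_fst[OF sf_rad hx, symmetric])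
  qed
  finally show ?thesis .
qed

lemma row_l_meas:
  assumes h: "h \<in> borel_measurable (rowM d)"
  shows "(\<lambda>x. \<integral>\<^sup>+ w. \<integral>\<^sup>+ s. h (x, (w, s)) \<partial>rademacher \<partial>std_gauss) \<in> borel_measurable (PiM {..<d} (\<lambda>_. std_gauss))"
proof -
  have h': "h \<in> borel_measurable (PiM {..<d} (\<lambda>_. std_gauss) \<Otimes>\<^sub>M (std_gauss \<Otimes>\<^sub>M rademacher))"
    using h by (simp add: rowM_def)
  have m: "(\<lambda>x. \<integral>\<^sup>+ p. h (x, p) \<partial>(std_gauss \<Otimes>\<^sub>M rademacher)) \<in> borel_measurable (PiM {..<d} (\<lambda>_. std_gauss))"
    by (rule sigma_finite_measure.borel_measurable_nn_integral_fst[OF sf_gauss_rad h'])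
  show ?thesis
  proof (rule measurable_cong[THEN iffD1, OF _ m])
    fix x assume x: "x \<in> space (PiM {..<d} (\<lambda>_. std_gauss))"
    have hx: "(\<lambda>p. h (x, p)) \<in> borel_measurable (std_gauss \<Otimes>\<^sub>M rademacher)"
      using rowM_Pair_meas[OF h x] by (simp add: case_prod_beta')
    show "(\<integral>\<^sup>+ p. h (x, p) \<partial>(std_gauss \<Otimes>\<^sub>M rademacher)) = (\<integral>\<^sup>+ w. \<integral>\<^sup>+ s. h (x, (w, s)) \<partial>rademacher \<partial>std_gauss)"
      by (rule sigma_finite_measure.nn_integral_fst[OF sf_rad hx, symmetric])
  qed
qed

lemma cwm_prod:
  assumes h: "\<And>i. i < n \<Longrightarrow> h i \<in> borel_measurable (rowM d)"
  shows "(\<integral>\<^sup>+\<omega>. (\<Prod>i<n. h i (fst \<omega> i, (fst (snd \<omega>) i, snd (snd \<omega>) i))) \<partial>cwm_space n d)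
       = (\<Prod>i<n. \<integral>\<^sup>+r. h i r \<partial>rowM d)"
proof -
  let ?A = "PiM {..<n} (\<lambda>i. PiM {..<d} (\<lambda>j. std_gauss))"
  let ?B = "PiM {..<n} (\<lambda>i. std_gauss)"
  let ?C = "PiM {..<n} (\<lambda>i. rademacher)"
  define F where "F = (\<lambda>\<omega>. (\<Prod>i<n. h i (fst \<omega> i, (fst (snd \<omega>) i, snd (snd \<omega>) i))))"
  have Fm: "F \<in> borel_measurable (?A \<Otimes>\<^sub>M (?B \<Otimes>\<^sub>M ?C))"
  proof -
    have "F \<in> borel_measurable (cwm_space n d)"
      unfolding F_def
      by (intro borel_measurable_prod_ennreal measurable_compose[OF rowmap_meas h]) auto
    then show ?thesis by (simp add: cwm_space_def)
  qed
  have sfC: "sigma_finite_measure ?C"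
    by (intro prob_space_imp_sigma_finite prob_space_PiM) auto
  have sfBC: "sigma_finite_measure (?B \<Otimes>\<^sub>M ?C)"
    by (intro prob_space_imp_sigma_finite prob_space_pair prob_space_PiM) auto
  have XA: "X i \<in> space (PiM {..<d} (\<lambda>_. std_gauss))" if "X \<in> space ?A" "i < n" for X i
    using that by (auto simp: space_PiM PiE_def Pi_def)
  have "(\<integral>\<^sup>+\<omega>. F \<omega> \<partial>cwm_space n d) = (\<integral>\<^sup>+ X. \<integral>\<^sup>+ p. F (X, p) \<partial>(?B \<Otimes>\<^sub>M ?C) \<partial>?A)"
    unfolding cwm_space_def by (rule sigma_finite_measure.nn_integral_fst[OF sfBC Fm, symmetric])
  also have "\<dots> = (\<integral>\<^sup>+ X. (\<Prod>i<n. \<integral>\<^sup>+ w. \<integral>\<^sup>+ s. h i (X i, (w, s)) \<partial>rademacher \<partial>std_gauss) \<partial>?A)"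
  proof (intro nn_integral_cong)
    fix X assume X: "X \<in> space ?A"
    have FX: "(\<lambda>p. F (X, p)) \<in> borel_measurable (?B \<Otimes>\<^sub>M ?C)"
      using measurable_Pair2[OF Fm X] .
    have "(\<integral>\<^sup>+ p. F (X, p) \<partial>(?B \<Otimes>\<^sub>M ?C)) = (\<integral>\<^sup>+ w. \<integral>\<^sup>+ \<sigma>. F (X, (w, \<sigma>)) \<partial>?C \<partial>?B)"
      by (rule sigma_finite_measure.nn_integral_fst[OF sfC FX, symmetric])
    also have "\<dots> = (\<integral>\<^sup>+ w. (\<Prod>i<n. \<integral>\<^sup>+ s. h i (X i, (w i, s)) \<partial>rademacher) \<partial>?B)"
    proof (intro nn_integral_cong)
      fix w
      show "(\<integral>\<^sup>+ \<sigma>. F (X, (w, \<sigma>)) \<partial>?C) = (\<Prod>i<n. \<integral>\<^sup>+ s. h i (X i, (w i, s)) \<partial>rademacher)"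
        unfolding F_def fst_conv snd_conv
        by (rule radP.product_nn_integral_prod) auto
    qed
    also have "\<dots> = (\<Prod>i<n. \<integral>\<^sup>+ w. \<integral>\<^sup>+ s. h i (X i, (w, s)) \<partial>rademacher \<partial>std_gauss)"
    proof (rule gaussP.product_nn_integral_prod)
      fix i assume i: "i \<in> {..<n}"
      have "(\<lambda>(w, s). h i (X i, (w, s))) \<in> borel_measurable (std_gauss \<Otimes>\<^sub>M rademacher)"
        using rowM_Pair_meas[OF h XA[OF X]] i by auto
      then show "(\<lambda>w. \<integral>\<^sup>+ s. h i (X i, (w, s)) \<partial>rademacher) \<in> borel_measurable std_gauss"
        by (intro sigma_finite_measure.borel_measurable_nn_integral[OF sf_rad]) (simp add: case_prod_beta')
    qed simp
    finally show "(\<integral>\<^sup>+ p. F (X, p) \<partial>(?B \<Otimes>\<^sub>M ?C)) = (\<Prod>i<n. \<integral>\<^sup>+ w. \<integral>\<^sup>+ s. h i (X i, (w, s)) \<partial>rademacher \<partial>std_gauss)" .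
  qed
  also have "\<dots> = (\<Prod>i<n. \<integral>\<^sup>+ x. \<integral>\<^sup>+ w. \<integral>\<^sup>+ s. h i (x, (w, s)) \<partial>rademacher \<partial>std_gauss \<partial>PiM {..<d} (\<lambda>_. std_gauss))"
    by (rule rowPiP.product_nn_integral_prod) (auto intro: row_l_meas h)
  also have "\<dots> = (\<Prod>i<n. \<integral>\<^sup>+r. h i r \<partial>rowM d)"
    by (intro prod.cong refl row_iter[symmetric] h) auto
  finally show ?thesis unfolding F_def .
qed

definition rowof :: "nat \<Rightarrow> (nat \<Rightarrow> nat \<Rightarrow> real) \<times> (nat \<Rightarrow> real) \<times> (nat \<Rightarrow> real) \<Rightarrow> (nat \<Rightarrow> real) \<times> real \<times> real" where
  "rowof i \<omega> = (fst \<omega> i, (fst (snd \<omega>) i, snd (snd \<omega>) i))"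

lemma rowof_meas: "i < n \<Longrightarrow> rowof i \<in> measurable (cwm_space n d) (rowM d)"
  unfolding rowof_def by (rule rowmap_meas)

definition Ztot where
  "Ztot n d \<beta> \<eta> j e t \<omega> = (\<Sum>i<n. Zf d \<beta> (\<eta> i) j e t (rowof i \<omega>))"

lemma Ztot_meas:
  assumes "j < d"
  shows "Ztot n d \<beta> \<eta> j e t \<in> borel_measurable (cwm_space n d)"
  unfolding Ztot_def
  by (intro borel_measurable_sum measurable_compose[OF rowof_meas Zf_meas[OF assms]]) auto

lemma chernoff_step:
  assumes j: "j < d" and e: "e = 1 \<or> e = -1" and t0: "0 \<le> t" and l: "0 < l"
  shows "emeasure (cwm_space n d) {\<omega>\<in>space (cwm_space n d). 0 \<le> Ztot n d \<beta> \<eta> j e t \<omega>}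
    \<le> ennreal (exp (- l * (\<Sum>i<n. measure (rowM d) (Midset d \<beta> (\<eta> i) j t)) + real n * l\<^sup>2 / 2))"
proof -
  let ?M = "cwm_space n d"
  let ?T = "{\<omega>\<in>space ?M. 0 \<le> Ztot n d \<beta> \<eta> j e t \<omega>}"
  have Tm: "?T \<in> sets ?M"
    by (rule borel_measurable_le[OF borel_measurable_const Ztot_meas[OF j]])
  have "emeasure ?M ?T = (\<integral>\<^sup>+\<omega>. indicator ?T \<omega> \<partial>?M)" by (rule nn_integral_indicator[OF Tm, symmetric])
  also have "\<dots> \<le> (\<integral>\<^sup>+\<omega>. ennreal (exp (l * Ztot n d \<beta> \<eta> j e t \<omega>)) \<partial>?M)"
  proof (intro nn_integral_mono)
    fix \<omega> show "indicator ?T \<omega> \<le> ennreal (exp (l * Ztot n d \<beta> \<eta> j e t \<omega>))"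
    proof (cases "\<omega> \<in> ?T")
      case True
      then have "0 \<le> Ztot n d \<beta> \<eta> j e t \<omega>" by blast
      then have "0 \<le> l * Ztot n d \<beta> \<eta> j e t \<omega>" using l by simp
      then have "1 \<le> exp (l * Ztot n d \<beta> \<eta> j e t \<omega>)" by simp
      then show ?thesis using True by (simp add: indicator_def)
    next
      case False
      then have "indicator ?T \<omega> = (0::ennreal)" by (rule indicator_simps(2))
      then show ?thesis by simp
    qed
  qed
  also have "\<dots> = (\<integral>\<^sup>+\<omega>. (\<Prod>i<n. ennreal (exp (l * Zf d \<beta> (\<eta> i) j e t (fst \<omega> i, (fst (snd \<omega>) i, snd (snd \<omega>) i))))) \<partial>?M)"
    by (intro nn_integral_cong)
       (simp add: Ztot_def rowof_def sum_distrib_left exp_sum prod_ennreal)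
  also have "\<dots> = (\<Prod>i<n. \<integral>\<^sup>+r. ennreal (exp (l * Zf d \<beta> (\<eta> i) j e t r)) \<partial>rowM d)"
  proof -
    have hm: "(\<lambda>r. ennreal (exp (l * Zf d \<beta> (\<eta> i) j e t r))) \<in> borel_measurable (rowM d)" if "i < n" for i
    proof -
      have "(\<lambda>x::real. ennreal (exp (l * x))) \<in> borel_measurable borel" by measurable
      from measurable_compose[OF Zf_meas[OF j] this]
      show ?thesis .
    qed
    from cwm_prod[where h="\<lambda>i r. ennreal (exp (l * Zf d \<beta> (\<eta> i) j e t r))", OF hm]
    show ?thesis .
  qed
  also have "\<dots> \<le> (\<Prod>i<n. ennreal (exp (- l * measure (rowM d) (Midset d \<beta> (\<eta> i) j t) + l\<^sup>2 / 2)))"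
    by (intro prod_mono_ennreal row_mgf[OF j e l t0])
  also have "\<dots> = ennreal (exp (- l * (\<Sum>i<n. measure (rowM d) (Midset d \<beta> (\<eta> i) j t)) + real n * l\<^sup>2 / 2))"
    by (simp add: prod_ennreal exp_sum[symmetric] sum_subtractf sum_negf sum_distrib_left)
  finally show ?thesis .
qed

lemma sorted_nth_pred:
  fixes ys :: "real list"
  assumes s: "sorted ys" and k: "k < length ys" and down: "\<And>x y. x \<le> y \<Longrightarrow> P y \<Longrightarrow> P x"
  shows "P (ys ! k) \<longleftrightarrow> k < length (filter P ys)"
proof -
  have L: "length (filter P ys) = card {i. i < length ys \<and> P (ys ! i)}"
    by (rule length_filter_conv_card)
  show ?thesis
  proof
    assume Pk: "P (ys ! k)"
    have "{..k} \<subseteq> {i. i < length ys \<and> P (ys ! i)}"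
    proof
      fix i assume "i \<in> {..k}"
      then have i: "i \<le> k" by simp
      then have "ys ! i \<le> ys ! k" using s k by (intro sorted_nth_mono) auto
      then show "i \<in> {i. i < length ys \<and> P (ys ! i)}" using down Pk i k by auto
    qed
    then have "card {..k} \<le> card {i. i < length ys \<and> P (ys ! i)}"
      by (intro card_mono) auto
    then show "k < length (filter P ys)" using L by simp
  next
    assume lt: "k < length (filter P ys)"
    show "P (ys ! k)"
    proof (rule ccontr)
      assume nP: "\<not> P (ys ! k)"
      have "{i. i < length ys \<and> P (ys ! i)} \<subseteq> {..<k}"
      proof
        fix i assume "i \<in> {i. i < length ys \<and> P (ys ! i)}"
        then have i: "i < length ys" "P (ys ! i)" by auto
        show "i \<in> {..<k}"
        proof (rule ccontr)
          assume "i \<notin> {..<k}"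
          then have "k \<le> i" by simp
          then have "ys ! k \<le> ys ! i" using s i by (intro sorted_nth_mono) auto
          then show False using down i nP by blast
        qed
      qed
      then have "card {i. i < length ys \<and> P (ys ! i)} \<le> card {..<k}"
        by (intro card_mono) auto
      then show False using L lt by simp
    qed
  qed
qed

lemma length_filter_sort: "length (filter P (sort xs)) = length (filter P xs)"
  by (metis mset_filter mset_sort size_mset)

lemma median_le:
  fixes xs :: "real list"
  assumes "length xs < 2 * length (filter (\<lambda>x. x \<le> a) xs)"
  shows "median xs \<le> a"
proof -
  define ys where "ys = sort xs"
  define k where "k = length ys"
  have s: "sorted ys" by (simp add: ys_def)
  have kx: "k = length xs" by (simp add: k_def ys_def)
  have c: "length (filter (\<lambda>x. x \<le> a) ys) = length (filter (\<lambda>x. x \<le> a) xs)"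
    by (simp add: ys_def length_filter_sort)
  have k0: "0 < k" using assms kx by (cases "k = 0") auto
  have le: "ys ! i \<le> a" if "i < k" "2 * i \<le> k" for i
  proof -
    have "i < length (filter (\<lambda>x. x \<le> a) ys)" using assms c kx that by linarith
    then show ?thesis using sorted_nth_pred[OF s, of i "\<lambda>x. x \<le> a"] that k_def by auto
  qed
  show ?thesis
  proof (cases "odd k")
    case True
    have "ys ! (k div 2) \<le> a" by (rule le) (use True k0 in \<open>auto elim!: oddE\<close>)
    then show ?thesis using True k0 unfolding median_def Let_def ys_def[symmetric] k_def[symmetric] by simp
  next
    case False
    then obtain q where q: "k = 2 * q" by (auto elim: evenE)
    with k0 have q0: "0 < q" by simp
    have "ys ! (k div 2 - 1) \<le> a" by (rule le) (use q q0 in auto)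
    moreover have "ys ! (k div 2) \<le> a" by (rule le) (use q q0 in auto)
    ultimately show ?thesis using False k0 unfolding median_def Let_def ys_def[symmetric] k_def[symmetric] by simp
  qed
qed

lemma median_ge:
  fixes xs :: "real list"
  assumes "length xs < 2 * length (filter (\<lambda>x. b \<le> x) xs)"
  shows "b \<le> median xs"
proof -
  define ys where "ys = sort xs"
  define k where "k = length ys"
  have s: "sorted ys" by (simp add: ys_def)
  have kx: "k = length xs" by (simp add: k_def ys_def)
  have compl: "length (filter (\<lambda>x. x < b) ys) + length (filter (\<lambda>x. b \<le> x) ys) = k"
    using sum_length_filter_compl[of "\<lambda>x. x < b" ys] by (simp add: k_def not_less)
  have c: "length (filter (\<lambda>x. b \<le> x) ys) = length (filter (\<lambda>x. b \<le> x) xs)"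
    by (simp add: ys_def length_filter_sort)
  have k0: "0 < k" using assms kx by (cases "k = 0") auto
  have ge: "b \<le> ys ! i" if "i < k" "k \<le> 2 * i + 2" for i
  proof -
    have "\<not> i < length (filter (\<lambda>x. x < b) ys)" using assms c kx compl that by linarith
    then show ?thesis using sorted_nth_pred[OF s, of i "\<lambda>x. x < b"] that k_def by force
  qed
  show ?thesis
  proof (cases "odd k")
    case True
    have "b \<le> ys ! (k div 2)" by (rule ge) (use True k0 in \<open>auto elim!: oddE\<close>)
    then show ?thesis using True k0 unfolding median_def Let_def ys_def[symmetric] k_def[symmetric] by simp
  next
    case False
    then obtain q where q: "k = 2 * q" by (auto elim: evenE)
    with k0 have q0: "0 < q" by simp
    have "b \<le> ys ! (k div 2 - 1)" by (rule ge) (use q q0 in auto)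
    moreover have "b \<le> ys ! (k div 2)" by (rule ge) (use q q0 in auto)
    ultimately show ?thesis using False k0 unfolding median_def Let_def ys_def[symmetric] k_def[symmetric] by simp
  qed
qed

lemma length_filter_map_filter:
  "length (filter P (map f (filter Q [0..<n]))) = card {i. i < n \<and> Q i \<and> P (f i)}"
proof -
  have "length (filter P (map f (filter Q [0..<n]))) = length (filter (\<lambda>i. Q i \<and> P (f i)) [0..<n])"
    by (simp add: filter_map filter_filter o_def conj_commute)
  also have "\<dots> = card {i. i < length [0..<n] \<and> Q ([0..<n] ! i) \<and> P (f ([0..<n] ! i))}"
    by (rule length_filter_conv_card)
  also have "{i. i < length [0..<n] \<and> Q ([0..<n] ! i) \<and> P (f ([0..<n] ! i))} = {i. i < n \<and> Q i \<and> P (f i)}"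
    by auto
  finally show ?thesis .
qed

lemma card_meas:
  fixes n :: nat and P :: "nat \<Rightarrow> 'a \<Rightarrow> bool"
  assumes P: "\<And>i. i < n \<Longrightarrow> {\<omega>\<in>space M. P i \<omega>} \<in> sets M"
  shows "(\<lambda>\<omega>. real (card {i. i < n \<and> P i \<omega>})) \<in> borel_measurable M"
proof -
  have m: "(\<lambda>\<omega>. \<Sum>i<n. indicator {\<omega>\<in>space M. P i \<omega>} \<omega> :: real) \<in> borel_measurable M"
    by (intro borel_measurable_sum borel_measurable_indicator P) auto
  show ?thesis
  proof (rule measurable_cong[THEN iffD1, OF _ m])
    fix \<omega> assume \<omega>: "\<omega> \<in> space M"
    have "(\<Sum>i<n. indicator {\<omega>\<in>space M. P i \<omega>} \<omega> :: real) = (\<Sum>i<n. if P i \<omega> then 1 else 0)"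
      using \<omega> by (intro sum.cong) (auto simp: indicator_def)
    also have "\<dots> = real (card {i\<in>{..<n}. P i \<omega>})"
      using sum.inter_filter[of "{..<n}" "\<lambda>_. (1::real)" "\<lambda>i. P i \<omega>"] by simp
    also have "{i\<in>{..<n}. P i \<omega>} = {i. i < n \<and> P i \<omega>}" by auto
    finally show "(\<Sum>i<n. indicator {\<omega>\<in>space M. P i \<omega>} \<omega> :: real) = real (card {i. i < n \<and> P i \<omega>})" .
  qed
qed

lemma median_meas:
  fixes r :: "nat \<Rightarrow> 'a \<Rightarrow> real" and q :: "nat \<Rightarrow> 'a \<Rightarrow> bool"
  assumes r: "\<And>i. i < n \<Longrightarrow> r i \<in> borel_measurable M"
    and q: "\<And>i. i < n \<Longrightarrow> {\<omega>\<in>space M. q i \<omega>} \<in> sets M"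
  shows "(\<lambda>\<omega>. median (map (\<lambda>i. r i \<omega>) (filter (\<lambda>i. q i \<omega>) [0..<n]))) \<in> borel_measurable M"
proof -
  define L where "L \<omega> = map (\<lambda>i. r i \<omega>) (filter (\<lambda>i. q i \<omega>) [0..<n])" for \<omega>
  define len where "len \<omega> = card {i. i < n \<and> q i \<omega>}" for \<omega>
  define cnt where "cnt a \<omega> = card {i. i < n \<and> q i \<omega> \<and> r i \<omega> \<le> a}" for a \<omega>
  have lenL: "length (L \<omega>) = len \<omega>" for \<omega>
    using length_filter_map_filter[of "\<lambda>_. True" "\<lambda>i. r i \<omega>" "\<lambda>i. q i \<omega>" n]
    by (simp add: L_def len_def)
  have cntL: "length (filter (\<lambda>x. x \<le> a) (L \<omega>)) = cnt a \<omega>" for a \<omega>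
    using length_filter_map_filter[of "\<lambda>x. x \<le> a" "\<lambda>i. r i \<omega>" "\<lambda>i. q i \<omega>" n]
    by (simp add: L_def cnt_def)
  have len_m: "(\<lambda>\<omega>. real (len \<omega>)) \<in> borel_measurable M"
    unfolding len_def by (rule card_meas[OF q])
  have cnt_m: "(\<lambda>\<omega>. real (cnt a \<omega>)) \<in> borel_measurable M" for a
    unfolding cnt_def
  proof (rule card_meas)
    fix i assume i: "i < n"
    have "{\<omega>\<in>space M. q i \<omega> \<and> r i \<omega> \<le> a} = {\<omega>\<in>space M. q i \<omega>} \<inter> {\<omega>\<in>space M. r i \<omega> \<le> a}" by auto
    also have "\<dots> \<in> sets M"
      by (intro sets.Int q i borel_measurable_le[OF r[OF i] borel_measurable_const])
    finally show "{\<omega>\<in>space M. q i \<omega> \<and> r i \<omega> \<le> a} \<in> sets M" .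
  qed
  define os where "os k \<omega> = (if k < len \<omega> then sort (L \<omega>) ! k else 0)" for k \<omega>
  have os_m: "os k \<in> borel_measurable M" for k
    unfolding borel_measurable_iff_le
  proof
    fix a
    have eq: "{\<omega>\<in>space M. os k \<omega> \<le> a} =
       ({\<omega>\<in>space M. real k < real (len \<omega>)} \<inter> {\<omega>\<in>space M. real k < real (cnt a \<omega>)})
       \<union> ({\<omega>\<in>space M. real (len \<omega>) \<le> real k} \<inter> {\<omega>\<in>space M. 0 \<le> a})"
    proof (intro set_eqI iffI)
      fix \<omega> assume "\<omega> \<in> {\<omega>\<in>space M. os k \<omega> \<le> a}"
      then have w: "\<omega> \<in> space M" "os k \<omega> \<le> a" by auto
      show "\<omega> \<in> ({\<omega>\<in>space M. real k < real (len \<omega>)} \<inter> {\<omega>\<in>space M. real k < real (cnt a \<omega>)})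
       \<union> ({\<omega>\<in>space M. real (len \<omega>) \<le> real k} \<inter> {\<omega>\<in>space M. 0 \<le> a})"
      proof (cases "k < len \<omega>")
        case True
        then have "sort (L \<omega>) ! k \<le> a" using w by (simp add: os_def)
        moreover have "k < length (sort (L \<omega>))" using True lenL by simp
        ultimately have "k < length (filter (\<lambda>x. x \<le> a) (sort (L \<omega>)))"
          using sorted_nth_pred[of "sort (L \<omega>)" k "\<lambda>x. x \<le> a"] by auto
        then have "k < cnt a \<omega>" by (simp add: length_filter_sort cntL)
        then show ?thesis using True w by auto
      next
        case False
        then show ?thesis using w by (auto simp: os_def)
      qed
    next
      fix \<omega> assume \<omega>: "\<omega> \<in> ({\<omega>\<in>space M. real k < real (len \<omega>)} \<inter> {\<omega>\<in>space M. real k < real (cnt a \<omega>)})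
       \<union> ({\<omega>\<in>space M. real (len \<omega>) \<le> real k} \<inter> {\<omega>\<in>space M. 0 \<le> a})"
      then have w: "\<omega> \<in> space M" by auto
      show "\<omega> \<in> {\<omega>\<in>space M. os k \<omega> \<le> a}"
      proof (cases "k < len \<omega>")
        case True
        then have "k < cnt a \<omega>" using \<omega> by auto
        then have "k < length (filter (\<lambda>x. x \<le> a) (sort (L \<omega>)))" by (simp add: length_filter_sort cntL)
        moreover have "k < length (sort (L \<omega>))" using True lenL by simp
        ultimately have "sort (L \<omega>) ! k \<le> a"
          using sorted_nth_pred[of "sort (L \<omega>)" k "\<lambda>x. x \<le> a"] by auto
        then show ?thesis using True w by (simp add: os_def)
      next
        case False
        then show ?thesis using \<omega> w by (auto simp: os_def)
      qed
    qed
    show "{\<omega>\<in>space M. os k \<omega> \<le> a} \<in> sets M"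
      unfolding eq
      by (intro sets.Un sets.Int borel_measurable_less[OF borel_measurable_const len_m]
          borel_measurable_less[OF borel_measurable_const cnt_m]
          borel_measurable_le[OF len_m borel_measurable_const])
         (auto intro: sets.sets_Collect_const)
  qed
  define G where "G m \<omega> = (if m = 0 then 0 else if odd m then os (m div 2) \<omega>
      else (os (m div 2 - 1) \<omega> + os (m div 2) \<omega>) / 2)" for m \<omega>
  have G_m: "(\<lambda>\<omega>. G m \<omega>) \<in> borel_measurable M" for m
    unfolding G_def
    by (cases "m = 0"; cases "odd m") (auto intro!: borel_measurable_divide borel_measurable_add os_m)
  have len_c: "len \<in> measurable M (count_space UNIV)"
    unfolding measurable_count_space_eq2_countable
  proof (intro conjI ballI)
    show "len \<in> space M \<rightarrow> UNIV" by simp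
    fix m :: nat
    have "len -` {m} \<inter> space M = {\<omega>\<in>space M. real (len \<omega>) = real m}" by auto
    also have "\<dots> \<in> sets M" by (rule borel_measurable_eq[OF len_m borel_measurable_const])
    finally show "len -` {m} \<inter> space M \<in> sets M" .
  qed
  have "(\<lambda>\<omega>. G (len \<omega>) \<omega>) \<in> borel_measurable M"
    by (rule measurable_compose_countable'[OF G_m len_c]) simp
  moreover have "median (L \<omega>) = G (len \<omega>) \<omega>" for \<omega>
  proof -
    have "len \<omega> = 0 \<or> (0 < len \<omega>)" by auto
    then show ?thesis
      unfolding median_def Let_def G_def os_def length_sort lenL
      by (auto simp: odd_pos)
  qed
  ultimately show ?thesis unfolding L_def by simp
qed

definition estw where
  "estw n d \<beta> \<eta> j \<omega> = median (map (\<lambda>i. Dv d \<beta> (\<eta> i) j (rowof i \<omega>) + \<beta> j)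
      (filter (\<lambda>i. inMr j (rowof i \<omega>)) [0..<n]))"

lemma est_eq:
  "cwm_estimate n (\<lambda>i. (\<Sum>k<d. X i k * \<beta> k) + \<eta> i) X w \<sigma> j = estw n d \<beta> \<eta> j (X, w, \<sigma>)"
  unfolding cwm_estimate_def estw_def Let_def Dv_def inMr_def rowof_def by simp

lemma rowof_space: "\<omega> \<in> space (cwm_space n d) \<Longrightarrow> i < n \<Longrightarrow> rowof i \<omega> \<in> space (rowM d)"
  using measurable_space[OF rowof_meas] by blast

lemma estw_meas:
  assumes j: "j < d"
  shows "estw n d \<beta> \<eta> j \<in> borel_measurable (cwm_space n d)"
  unfolding estw_def
proof (rule median_meas)
  fix i assume i: "i < n"
  show "(\<lambda>\<omega>. Dv d \<beta> (\<eta> i) j (rowof i \<omega>) + \<beta> j) \<in> borel_measurable (cwm_space n d)"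
    by (intro borel_measurable_add borel_measurable_const measurable_compose[OF rowof_meas[OF i] Dv_measurable[OF j]])
  have "Measurable.pred (cwm_space n d) (\<lambda>\<omega>. inMr j (rowof i \<omega>))"
    by (rule measurable_compose[OF rowof_meas[OF i] inMr_measurable[OF j]])
  then show "{\<omega> \<in> space (cwm_space n d). inMr j (rowof i \<omega>)} \<in> sets (cwm_space n d)"
    by (rule predE)
qed

lemma sum_ind_card:
  fixes n :: nat
  shows "(\<Sum>i<n. indicator S (g i) :: real) = real (card {i. i < n \<and> g i \<in> S})"
proof -
  have "(\<Sum>i<n. indicator S (g i) :: real) = (\<Sum>i<n. if g i \<in> S then 1 else 0)"
    by (intro sum.cong) (auto simp: indicator_def)
  also have "\<dots> = real (card {i. i < n \<and> g i \<in> S})"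
    using sum.inter_filter[of "{..<n}" "\<lambda>_. (1::real)" "\<lambda>i. g i \<in> S"] by simp
  finally show ?thesis .
qed

lemma Ztot_card:
  assumes \<omega>: "\<omega> \<in> space (cwm_space n d)"
  shows "Ztot n d \<beta> \<eta> j e t \<omega> =
    real (card {i. i < n \<and> inMr j (rowof i \<omega>) \<and> e * Dv d \<beta> (\<eta> i) j (rowof i \<omega>) > t})
  - real (card {i. i < n \<and> inMr j (rowof i \<omega>) \<and> e * Dv d \<beta> (\<eta> i) j (rowof i \<omega>) \<le> t})"
proof -
  have "Ztot n d \<beta> \<eta> j e t \<omega> = (\<Sum>i<n. indicator (Bset d \<beta> (\<eta> i) j e t) (rowof i \<omega>))
     - (\<Sum>i<n. indicator (Aset d \<beta> (\<eta> i) j e t) (rowof i \<omega>) :: real)"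
    unfolding Ztot_def Zf_def by (simp add: sum_subtractf)
  also have "(\<Sum>i<n. indicator (Bset d \<beta> (\<eta> i) j e t) (rowof i \<omega>) :: real)
      = (\<Sum>i<n. if inMr j (rowof i \<omega>) \<and> e * Dv d \<beta> (\<eta> i) j (rowof i \<omega>) > t then 1 else 0)"
    using rowof_space[OF \<omega>] by (intro sum.cong) (auto simp: indicator_def Bset_def)
  also have "(\<Sum>i<n. indicator (Aset d \<beta> (\<eta> i) j e t) (rowof i \<omega>) :: real)
      = (\<Sum>i<n. if inMr j (rowof i \<omega>) \<and> e * Dv d \<beta> (\<eta> i) j (rowof i \<omega>) \<le> t then 1 else 0)"
    using rowof_space[OF \<omega>] by (intro sum.cong) (auto simp: indicator_def Aset_def)
  finally show ?thesis
    using sum.inter_filter[of "{..<n}" "\<lambda>_. (1::real)" "\<lambda>i. inMr j (rowof i \<omega>) \<and> e * Dv d \<beta> (\<eta> i) j (rowof i \<omega>) > t"]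
      sum.inter_filter[of "{..<n}" "\<lambda>_. (1::real)" "\<lambda>i. inMr j (rowof i \<omega>) \<and> e * Dv d \<beta> (\<eta> i) j (rowof i \<omega>) \<le> t"]
    by (simp add: conj_commute)
qed

lemma good_coord:
  assumes \<omega>: "\<omega> \<in> space (cwm_space n d)"
    and up: "Ztot n d \<beta> \<eta> j 1 t \<omega> < 0" and lo: "Ztot n d \<beta> \<eta> j (-1) t \<omega> < 0"
  shows "\<bar>estw n d \<beta> \<eta> j \<omega> - \<beta> j\<bar> \<le> t"
proof -
  let ?D = "\<lambda>i. Dv d \<beta> (\<eta> i) j (rowof i \<omega>)"
  let ?Q = "\<lambda>i. inMr j (rowof i \<omega>)"
  let ?L = "map (\<lambda>i. ?D i + \<beta> j) (filter ?Q [0..<n])"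
  have lenL: "length ?L = card {i. i < n \<and> ?Q i}"
    using length_filter_map_filter[of "\<lambda>_. True" "\<lambda>i. ?D i + \<beta> j" ?Q n] by simp
  have split: "card {i. i < n \<and> ?Q i} = card {i. i < n \<and> ?Q i \<and> P i} + card {i. i < n \<and> ?Q i \<and> \<not> P i}" for P
  proof -
    have "{i. i < n \<and> ?Q i} = {i. i < n \<and> ?Q i \<and> P i} \<union> {i. i < n \<and> ?Q i \<and> \<not> P i}" by auto
    then show ?thesis by (simp add: card_Un_disjoint[symmetric] disjoint_iff)
  qed
  have "estw n d \<beta> \<eta> j \<omega> \<le> \<beta> j + t"
  proof -
    have c: "card {i. i < n \<and> ?Q i \<and> 1 * ?D i > t} < card {i. i < n \<and> ?Q i \<and> 1 * ?D i \<le> t}"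
      using up Ztot_card[OF \<omega>, of \<beta> \<eta> j 1 t] by simp
    have "length (filter (\<lambda>x. x \<le> \<beta> j + t) ?L) = card {i. i < n \<and> ?Q i \<and> ?D i + \<beta> j \<le> \<beta> j + t}"
      by (rule length_filter_map_filter)
    also have "\<dots> = card {i. i < n \<and> ?Q i \<and> 1 * ?D i \<le> t}" by simp
    finally have A: "length (filter (\<lambda>x. x \<le> \<beta> j + t) ?L) = card {i. i < n \<and> ?Q i \<and> 1 * ?D i \<le> t}" .
    have "length ?L = card {i. i < n \<and> ?Q i \<and> 1 * ?D i \<le> t} + card {i. i < n \<and> ?Q i \<and> 1 * ?D i > t}"
      unfolding lenL split[of "\<lambda>i. 1 * ?D i \<le> t"] by (simp add: not_le)
    then have "length ?L < 2 * length (filter (\<lambda>x. x \<le> \<beta> j + t) ?L)" using A c by linarith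
    then show ?thesis unfolding estw_def by (rule median_le)
  qed
  moreover have "\<beta> j - t \<le> estw n d \<beta> \<eta> j \<omega>"
  proof -
    have c: "card {i. i < n \<and> ?Q i \<and> -1 * ?D i > t} < card {i. i < n \<and> ?Q i \<and> -1 * ?D i \<le> t}"
      using lo Ztot_card[OF \<omega>, of \<beta> \<eta> j "-1" t] by simp
    have "length (filter (\<lambda>x. \<beta> j - t \<le> x) ?L) = card {i. i < n \<and> ?Q i \<and> \<beta> j - t \<le> ?D i + \<beta> j}"
      by (rule length_filter_map_filter)
    also have "\<dots> = card {i. i < n \<and> ?Q i \<and> -1 * ?D i \<le> t}" by (intro arg_cong[where f=card]) auto
    finally have A: "length (filter (\<lambda>x. \<beta> j - t \<le> x) ?L) = card {i. i < n \<and> ?Q i \<and> -1 * ?D i \<le> t}" .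
    have "length ?L = card {i. i < n \<and> ?Q i \<and> -1 * ?D i \<le> t} + card {i. i < n \<and> ?Q i \<and> -1 * ?D i > t}"
      unfolding lenL split[of "\<lambda>i. -1 * ?D i \<le> t"] by (simp add: not_le)
    then have "length ?L < 2 * length (filter (\<lambda>x. \<beta> j - t \<le> x) ?L)" using A c by linarith
    then show ?thesis unfolding estw_def by (rule median_ge)
  qed
  ultimately show ?thesis by (simp add: abs_le_iff)
qed

definition kappa :: real where "kappa = kappa1 * kappa2\<^sup>2 / 2"
lemma kappa_pos: "0 < kappa" using kappa1_pos kappa2_pos by (simp add: kappa_def)

lemma tail_prob:
  fixes \<beta> \<eta> :: "nat \<Rightarrow> real"
  assumes j: "j < d" and e: "e = 1 \<or> e = -1" and t: "0 < t" "t \<le> s"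
    and s: "s = sqrt (1 + (\<Sum>k<d. (\<beta> k)\<^sup>2))"
    and G: "\<alpha> * real n \<le> real (card {i \<in> {..<n}. \<bar>\<eta> i\<bar> \<le> 1})" and \<alpha>: "0 < \<alpha>" and n: "0 < n"
  shows "measure (cwm_space n d) {\<omega>\<in>space (cwm_space n d). 0 \<le> Ztot n d \<beta> \<eta> j e t \<omega>}
     \<le> exp (- (\<alpha> * real n * (kappa * t / s))\<^sup>2 / (2 * real n))"
proof -
  interpret R: prob_space "rowM d" by simp
  interpret C: prob_space "cwm_space n d" by simp
  define m where "m i = measure (rowM d) (Midset d \<beta> (\<eta> i) j t)" for i
  define P where "P = (\<Sum>i<n. m i)"
  define P0 where "P0 = \<alpha> * real n * (kappa * t / s)"
  have s1: "1 \<le> s" unfolding s by (simp add: sum_nonneg)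
  have m0: "0 \<le> m i" for i by (simp add: m_def)
  have mg: "kappa * t / s \<le> m i" if "\<bar>\<eta> i\<bar> \<le> 1" for i
  proof -
    have "ennreal (kappa1 * (kappa2\<^sup>2 * (t/2) / s)) \<le> emeasure (rowM d) (Midset d \<beta> (\<eta> i) j t)"
      unfolding Midset_def by (rule row_mid_lower[OF j that t s])
    also have "\<dots> = ennreal (m i)" by (simp add: m_def R.emeasure_eq_measure)
    finally have "kappa1 * (kappa2\<^sup>2 * (t/2) / s) \<le> m i"
      using m0 by (subst (asm) ennreal_le_iff) auto
    moreover have "kappa1 * (kappa2\<^sup>2 * (t/2) / s) = kappa * t / s" by (simp add: kappa_def)
    ultimately show ?thesis by simp
  qed
  have P0pos: "0 < P0" unfolding P0_def using \<alpha> n kappa_pos t s1 by simp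
  have PP0: "P0 \<le> P"
  proof -
    let ?G = "{i \<in> {..<n}. \<bar>\<eta> i\<bar> \<le> 1}"
    have "P0 \<le> real (card ?G) * (kappa * t / s)"
      unfolding P0_def using G kappa_pos t s1 by (intro mult_right_mono) auto
    also have "\<dots> = (\<Sum>i\<in>?G. kappa * t / s)" by simp
    also have "\<dots> \<le> (\<Sum>i\<in>?G. m i)" by (intro sum_mono mg) auto
    also have "\<dots> \<le> (\<Sum>i<n. m i)" by (intro sum_mono2 m0) auto
    finally show ?thesis unfolding P_def .
  qed
  define l where "l = P / real n"
  have l: "0 < l" using P0pos PP0 n by (simp add: l_def)
  have "emeasure (cwm_space n d) {\<omega>\<in>space (cwm_space n d). 0 \<le> Ztot n d \<beta> \<eta> j e t \<omega>}
     \<le> ennreal (exp (- l * (\<Sum>i<n. measure (rowM d) (Midset d \<beta> (\<eta> i) j t)) + real n * l\<^sup>2 / 2))"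
    by (rule chernoff_step[OF j e _ l]) (use t in simp)
  also have "- l * (\<Sum>i<n. measure (rowM d) (Midset d \<beta> (\<eta> i) j t)) + real n * l\<^sup>2 / 2 = - P\<^sup>2 / (2 * real n)"
    using n unfolding l_def P_def m_def by (simp add: power2_eq_square field_simps)
  also have "- P\<^sup>2 / (2 * real n) \<le> - P0\<^sup>2 / (2 * real n)"
  proof -
    have "P0\<^sup>2 \<le> P\<^sup>2" using P0pos PP0 by (intro power_mono) auto
    then show ?thesis using n by (simp add: divide_right_mono)
  qed
  finally have "emeasure (cwm_space n d) {\<omega>\<in>space (cwm_space n d). 0 \<le> Ztot n d \<beta> \<eta> j e t \<omega>}
     \<le> ennreal (exp (- P0\<^sup>2 / (2 * real n)))"
    by (meson ennreal_leI exp_le_cancel_iff order_trans)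
  then show ?thesis unfolding P0_def
    by (simp add: C.emeasure_eq_measure ennreal_le_iff)
qed

lemma stmt_set_eq:
  "{(X, w, \<sigma>) \<in> space (cwm_space n d).
      (let y = (\<lambda>i. (\<Sum>j<d. X i j * \<beta> j) + \<eta> i) in
       (\<Sum>j<d. (\<beta> j - cwm_estimate n y X w \<sigma> j)\<^sup>2) \<le> R)}
   = {\<omega> \<in> space (cwm_space n d). (\<Sum>j<d. (\<beta> j - estw n d \<beta> \<eta> j \<omega>)\<^sup>2) \<le> R}"
  by (auto simp: Let_def est_eq)

theorem mainTheorem14:
  "\<exists>c::real. c > 0 \<and>
    (\<forall>(n::nat) (d::nat) (\<beta>::nat \<Rightarrow> real) (\<eta>::nat \<Rightarrow> real) (\<alpha>::real) (\<tau>::real).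
       0 < \<alpha> \<and> \<alpha> \<le> 1 \<and>
       real (card {i \<in> {..<n}. \<bar>\<eta> i\<bar> \<le> 1}) \<ge> \<alpha> * real n \<and>
       0 < \<tau> \<and> \<tau> \<le> \<alpha>\<^sup>2 * real n \<longrightarrow>
       measure (cwm_space n d)
         {(X, w, \<sigma>) \<in> space (cwm_space n d).
            (let y = (\<lambda>i. (\<Sum>j<d. X i j * \<beta> j) + \<eta> i) in
             (\<Sum>j<d. (\<beta> j - cwm_estimate n y X w \<sigma> j)\<^sup>2)
               \<le> real d * \<tau> / (\<alpha>\<^sup>2 * real n) * (1 + (\<Sum>j<d. (\<beta> j)\<^sup>2)))}
       \<ge> 1 - 2 * exp (ln (real d) - c * \<tau>))"
proof (intro exI[of _ "kappa\<^sup>2 / 2"] conjI allI impI)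
  show "0 < kappa\<^sup>2 / 2" using kappa_pos by simp
  fix n d :: nat and \<beta> \<eta> :: "nat \<Rightarrow> real" and \<alpha> \<tau> :: real
  assume H: "0 < \<alpha> \<and> \<alpha> \<le> 1 \<and> real (card {i \<in> {..<n}. \<bar>\<eta> i\<bar> \<le> 1}) \<ge> \<alpha> * real n \<and>
       0 < \<tau> \<and> \<tau> \<le> \<alpha>\<^sup>2 * real n"
  then have \<alpha>: "0 < \<alpha>" and G: "\<alpha> * real n \<le> real (card {i \<in> {..<n}. \<bar>\<eta> i\<bar> \<le> 1})"
    and \<tau>: "0 < \<tau>" "\<tau> \<le> \<alpha>\<^sup>2 * real n" by auto
  let ?M = "cwm_space n d"
  interpret C: prob_space ?M by simp
  have n: "0 < n" using \<tau> by (cases n) auto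
  define B where "B = (\<Sum>j<d. (\<beta> j)\<^sup>2)"
  define s where "s = sqrt (1 + B)"
  define r where "r = \<tau> / (\<alpha>\<^sup>2 * real n)"
  define t where "t = s * sqrt r"
  define c where "c = kappa\<^sup>2 / 2"
  have B0: "0 \<le> B" unfolding B_def by (simp add: sum_nonneg)
  have s1: "1 \<le> s" unfolding s_def using B0 by simp
  have r: "0 < r" "r \<le> 1" unfolding r_def using \<alpha> n \<tau> by (auto simp: divide_le_eq_1)
  have t: "0 < t" "t \<le> s" unfolding t_def using s1 r by (auto simp: mult_le_cancel_left1)
  have t2: "t\<^sup>2 = (1 + B) * r" unfolding t_def s_def using B0 r by (simp add: power_mult_distrib)
  define T where "T j e = {\<omega>\<in>space ?M. 0 \<le> Ztot n d \<beta> \<eta> j e t \<omega>}" for j e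
  have Tm: "T j e \<in> sets ?M" if "j < d" for j e
    unfolding T_def by (rule borel_measurable_le[OF borel_measurable_const Ztot_meas[OF that]])
  have Tp: "measure ?M (T j e) \<le> exp (- c * \<tau>)" if j: "j < d" and e: "e = 1 \<or> e = -1" for j e
  proof -
    have "measure ?M (T j e) \<le> exp (- (\<alpha> * real n * (kappa * t / s))\<^sup>2 / (2 * real n))"
      unfolding T_def by (rule tail_prob[OF j e t s_def[unfolded B_def] G \<alpha> n])
    also have "- (\<alpha> * real n * (kappa * t / s))\<^sup>2 / (2 * real n) = - c * \<tau>"
    proof -
      have ts: "t / s = sqrt r" unfolding t_def using s1 by simp
      have ks: "kappa * t / s = kappa * sqrt r" by (metis ts times_divide_eq_right)
      have "(\<alpha> * real n * (kappa * t / s))\<^sup>2 = \<alpha>\<^sup>2 * (real n)\<^sup>2 * kappa\<^sup>2 * r"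
        unfolding ks using r by (simp add: power_mult_distrib)
      also have "\<dots> = real n * kappa\<^sup>2 * \<tau>"
        unfolding r_def using \<alpha> n by (simp add: power2_eq_square field_simps)
      finally show ?thesis unfolding c_def using n by (simp add: field_simps)
    qed
    finally show ?thesis .
  qed
  define U where "U = (\<Union>j\<in>{..<d}. T j 1 \<union> T j (-1))"
  have Um: "U \<in> sets ?M" unfolding U_def using Tm by auto
  have mU: "measure ?M U \<le> real d * (2 * exp (- c * \<tau>))"
  proof -
    have "measure ?M U \<le> (\<Sum>j<d. measure ?M (T j 1 \<union> T j (-1)))"
      unfolding U_def by (rule C.finite_measure_subadditive_finite) (use Tm in auto)
    also have "\<dots> \<le> (\<Sum>j<d. 2 * exp (- c * \<tau>))"
    proof (rule sum_mono)
      fix j assume "j \<in> {..<d}"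
      then have j: "j < d" by simp
      have "measure ?M (T j 1 \<union> T j (-1)) \<le> measure ?M (T j 1) + measure ?M (T j (-1))"
        by (rule measure_Un_le) (use Tm[OF j] in auto)
      also have "\<dots> \<le> exp (- c * \<tau>) + exp (- c * \<tau>)"
        by (intro add_mono Tp[OF j]) auto
      finally show "measure ?M (T j 1 \<union> T j (-1)) \<le> 2 * exp (- c * \<tau>)" by simp
    qed
    also have "\<dots> = real d * (2 * exp (- c * \<tau>))" by simp
    finally show ?thesis .
  qed
  define S where "S = {\<omega> \<in> space ?M. (\<Sum>j<d. (\<beta> j - estw n d \<beta> \<eta> j \<omega>)\<^sup>2) \<le> real d * \<tau> / (\<alpha>\<^sup>2 * real n) * (1 + B)}"
  have Sm: "S \<in> sets ?M"
    unfolding S_def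
    by (intro borel_measurable_le borel_measurable_const borel_measurable_sum
        borel_measurable_power borel_measurable_diff estw_meas) auto
  have sub: "space ?M - U \<subseteq> S"
  proof
    fix \<omega> assume w: "\<omega> \<in> space ?M - U"
    then have w1: "\<omega> \<in> space ?M" by simp
    have "(\<beta> j - estw n d \<beta> \<eta> j \<omega>)\<^sup>2 \<le> t\<^sup>2" if j: "j < d" for j
    proof -
      have "\<omega> \<notin> T j 1" "\<omega> \<notin> T j (-1)" using w j by (auto simp: U_def)
      then have "Ztot n d \<beta> \<eta> j 1 t \<omega> < 0" "Ztot n d \<beta> \<eta> j (-1) t \<omega> < 0"
        using w1 by (auto simp: T_def)
      from good_coord[OF w1 this] have "\<bar>\<beta> j - estw n d \<beta> \<eta> j \<omega>\<bar> \<le> t" by simp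
      then show ?thesis using t by (metis abs_ge_zero power2_abs power_mono)
    qed
    then have "(\<Sum>j<d. (\<beta> j - estw n d \<beta> \<eta> j \<omega>)\<^sup>2) \<le> (\<Sum>j<d. t\<^sup>2)" by (intro sum_mono) auto
    also have "\<dots> = real d * \<tau> / (\<alpha>\<^sup>2 * real n) * (1 + B)"
      unfolding t2 r_def by simp
    finally show "\<omega> \<in> S" using w1 by (simp add: S_def)
  qed
  have "1 - real d * (2 * exp (- c * \<tau>)) \<le> 1 - measure ?M U" using mU by simp
  also have "\<dots> = measure ?M (space ?M - U)"
    using C.finite_measure_compl[OF Um] by (simp add: C.prob_space)
  also have "\<dots> \<le> measure ?M S"
    by (rule C.finite_measure_mono[OF sub Sm])
  finally have main: "1 - real d * (2 * exp (- c * \<tau>)) \<le> measure ?M S" .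
  have "1 - 2 * exp (ln (real d) - c * \<tau>) \<le> 1 - real d * (2 * exp (- c * \<tau>))"
  proof (cases "d = 0")
    case True
    then show ?thesis by simp
  next
    case False
    then have "exp (ln (real d) - c * \<tau>) = real d * exp (- c * \<tau>)"
      by (simp add: exp_diff exp_minus field_simps)
    then show ?thesis by simp
  qed
  also note main
  also have "S = {(X, w, \<sigma>) \<in> space (cwm_space n d).
            (let y = (\<lambda>i. (\<Sum>j<d. X i j * \<beta> j) + \<eta> i) in
             (\<Sum>j<d. (\<beta> j - cwm_estimate n y X w \<sigma> j)\<^sup>2)
               \<le> real d * \<tau> / (\<alpha>\<^sup>2 * real n) * (1 + (\<Sum>j<d. (\<beta> j)\<^sup>2)))}"
    unfolding S_def B_def by (rule stmt_set_eq[symmetric])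
  finally show "1 - 2 * exp (ln (real d) - kappa\<^sup>2 / 2 * \<tau>) \<le> measure (cwm_space n d)
         {(X, w, \<sigma>) \<in> space (cwm_space n d).
            (let y = (\<lambda>i. (\<Sum>j<d. X i j * \<beta> j) + \<eta> i) in
             (\<Sum>j<d. (\<beta> j - cwm_estimate n y X w \<sigma> j)\<^sup>2)
               \<le> real d * \<tau> / (\<alpha>\<^sup>2 * real n) * (1 + (\<Sum>j<d. (\<beta> j)\<^sup>2)))}"
    unfolding c_def .
qed

end
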